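(* Let $d\geqslant 2$ and $a=(a_1,\dots,a_d)\in\mathbb{Z}_p^d$ with $a_d\neq 0$. Let $L$ be the $\mathbb{Z}_p$-Lie lattice $\mathbb{Z}_p^{d+1}$ with canonical basis $(x_0,\dots,x_d)$ and bracket determined by $[x_i,x_j]=0$ for $1\leqslant i,j\leqslant d$, $[x_0,x_1]=\sum_{i=1}^d a_ix_i$, and $[x_0,x_{i+1}]=x_i$ for $1\leqslant i<d$. Then $L$ admits a finite-index subalgebra that is not self-similar of index $p$.
   Context: $p$ is any prime. A virtual endomorphism of a $\mathbb{Z}_p$-Lie lattice $M$ is a homomorphism of algebras $\varphi:N\to M$ with $N\subseteq M$ a finite-index subalgebra, of index $[M:N]$. An ideal $I$ of $M$ is $\varphi$-invariant if it lies in the domain of every power of $\varphi$ and $\varphi(I)\subseteq I$; $\varphi$ is simple if no non-zero ideal is $\varphi$-invariant. $M$ is self-similar of index $p^k$ if it has a simple virtual endomorphism of index $p^k$. *)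

theory Defs
  imports "HOL-Computational_Algebra.Primes"
begin

text \<open>An element of Z_p is a compatible sequence of residues x n in {0..<p^n}
  with x n = x (Suc n) mod p^n.  Ring operations are computed level-wise.\<close>

type_synonym zp = "nat \<Rightarrow> int"

definition zp_carrier :: "nat \<Rightarrow> zp set" where
  "zp_carrier p = {x. \<forall>n. 0 \<le> x n \<and> x n < int p ^ n \<and> x n = x (Suc n) mod int p ^ n}"

definition zp_zero :: zp where "zp_zero = (\<lambda>n. 0)"
definition zp_one :: "nat \<Rightarrow> zp" where "zp_one p = (\<lambda>n. 1 mod int p ^ n)"
definition zp_add :: "nat \<Rightarrow> zp \<Rightarrow> zp \<Rightarrow> zp" where
  "zp_add p x y = (\<lambda>n. (x n + y n) mod int p ^ n)"
definition zp_neg :: "nat \<Rightarrow> zp \<Rightarrow> zp" where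
  "zp_neg p x = (\<lambda>n. (- x n) mod int p ^ n)"
definition zp_mul :: "nat \<Rightarrow> zp \<Rightarrow> zp \<Rightarrow> zp" where
  "zp_mul p x y = (\<lambda>n. (x n * y n) mod int p ^ n)"

type_synonym vec = "nat \<Rightarrow> zp"

definition vzero :: vec where "vzero = (\<lambda>i. zp_zero)"
definition vadd :: "nat \<Rightarrow> vec \<Rightarrow> vec \<Rightarrow> vec" where
  "vadd p u v = (\<lambda>i. zp_add p (u i) (v i))"
definition vsub :: "nat \<Rightarrow> vec \<Rightarrow> vec \<Rightarrow> vec" where
  "vsub p u v = (\<lambda>i. zp_add p (u i) (zp_neg p (v i)))"
definition vsmul :: "nat \<Rightarrow> zp \<Rightarrow> vec \<Rightarrow> vec" where
  "vsmul p r v = (\<lambda>i. zp_mul p r (v i))"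

definition Lcar :: "nat \<Rightarrow> nat \<Rightarrow> vec set" where
  "Lcar p d = {v. (\<forall>i\<le>d. v i \<in> zp_carrier p) \<and> (\<forall>i>d. v i = zp_zero)}"

text \<open>Structure constants: [x_i, x_j] = sum_k (sc i j k) x_k, with
  [x_0,x_1] = sum_{k=1}^d a_k x_k, [x_0,x_{i+1}] = x_i for 1 <= i < d,
  antisymmetry, and all other brackets of basis vectors zero.\<close>

definition sc :: "nat \<Rightarrow> nat \<Rightarrow> (nat \<Rightarrow> zp) \<Rightarrow> nat \<Rightarrow> nat \<Rightarrow> nat \<Rightarrow> zp" where
  "sc p d a i j k =
    (if i = 0 \<and> j = 1 then (if 1 \<le> k \<and> k \<le> d then a k else zp_zero)
     else if i = 1 \<and> j = 0 then (if 1 \<le> k \<and> k \<le> d then zp_neg p (a k) else zp_zero)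
     else if i = 0 \<and> 2 \<le> j \<and> j \<le> d then (if k = j - 1 then zp_one p else zp_zero)
     else if j = 0 \<and> 2 \<le> i \<and> i \<le> d then (if k = i - 1 then zp_neg p (zp_one p) else zp_zero)
     else zp_zero)"

definition Lbr :: "nat \<Rightarrow> nat \<Rightarrow> (nat \<Rightarrow> zp) \<Rightarrow> vec \<Rightarrow> vec \<Rightarrow> vec" where
  "Lbr p d a u v = (\<lambda>k. if k \<le> d then
      (\<lambda>n. (\<Sum>i\<le>d. \<Sum>j\<le>d. u i n * v j n * sc p d a i j k n) mod int p ^ n)
     else zp_zero)"

definition subalg :: "nat \<Rightarrow> (vec \<Rightarrow> vec \<Rightarrow> vec) \<Rightarrow> vec set \<Rightarrow> vec set \<Rightarrow> bool" where
  "subalg p br M N \<longleftrightarrow> N \<subseteq> M \<and> vzero \<in> N \<and>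
     (\<forall>x\<in>N. \<forall>y\<in>N. vadd p x y \<in> N) \<and>
     (\<forall>r\<in>zp_carrier p. \<forall>x\<in>N. vsmul p r x \<in> N) \<and>
     (\<forall>x\<in>N. \<forall>y\<in>N. br x y \<in> N)"

definition cosets :: "nat \<Rightarrow> vec set \<Rightarrow> vec set \<Rightarrow> vec set set" where
  "cosets p M N = (\<lambda>x. {y \<in> M. vsub p y x \<in> N}) ` M"

definition finite_index :: "nat \<Rightarrow> vec set \<Rightarrow> vec set \<Rightarrow> bool" where
  "finite_index p M N \<longleftrightarrow> finite (cosets p M N)"

definition lindex :: "nat \<Rightarrow> vec set \<Rightarrow> vec set \<Rightarrow> nat" where
  "lindex p M N = card (cosets p M N)"

definition lie_ideal :: "nat \<Rightarrow> (vec \<Rightarrow> vec \<Rightarrow> vec) \<Rightarrow> vec set \<Rightarrow> vec set \<Rightarrow> bool" where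
  "lie_ideal p br M I \<longleftrightarrow> I \<subseteq> M \<and> vzero \<in> I \<and>
     (\<forall>x\<in>I. \<forall>y\<in>I. vadd p x y \<in> I) \<and>
     (\<forall>r\<in>zp_carrier p. \<forall>x\<in>I. vsmul p r x \<in> I) \<and>
     (\<forall>x\<in>M. \<forall>y\<in>I. br x y \<in> I)"

definition virt_endo :: "nat \<Rightarrow> (vec \<Rightarrow> vec \<Rightarrow> vec) \<Rightarrow> vec set \<Rightarrow> vec set \<Rightarrow> (vec \<Rightarrow> vec) \<Rightarrow> bool" where
  "virt_endo p br M N \<phi> \<longleftrightarrow> subalg p br M N \<and> finite_index p M N \<and>
     (\<forall>x\<in>N. \<phi> x \<in> M) \<and>
     (\<forall>x\<in>N. \<forall>y\<in>N. \<phi> (vadd p x y) = vadd p (\<phi> x) (\<phi> y)) \<and>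
     (\<forall>r\<in>zp_carrier p. \<forall>x\<in>N. \<phi> (vsmul p r x) = vsmul p r (\<phi> x)) \<and>
     (\<forall>x\<in>N. \<forall>y\<in>N. \<phi> (br x y) = br (\<phi> x) (\<phi> y))"

fun pow_dom :: "vec set \<Rightarrow> vec set \<Rightarrow> (vec \<Rightarrow> vec) \<Rightarrow> nat \<Rightarrow> vec set" where
  "pow_dom M N \<phi> 0 = M"
| "pow_dom M N \<phi> (Suc k) = {x \<in> N. \<phi> x \<in> pow_dom M N \<phi> k}"

definition invariant :: "vec set \<Rightarrow> vec set \<Rightarrow> (vec \<Rightarrow> vec) \<Rightarrow> vec set \<Rightarrow> bool" where
  "invariant M N \<phi> I \<longleftrightarrow> (\<forall>k. I \<subseteq> pow_dom M N \<phi> k) \<and> \<phi> ` I \<subseteq> I"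

definition simple_ve :: "nat \<Rightarrow> (vec \<Rightarrow> vec \<Rightarrow> vec) \<Rightarrow> vec set \<Rightarrow> vec set \<Rightarrow> (vec \<Rightarrow> vec) \<Rightarrow> bool" where
  "simple_ve p br M N \<phi> \<longleftrightarrow>
     (\<forall>I. lie_ideal p br M I \<and> invariant M N \<phi> I \<longrightarrow> I = {vzero})"

definition self_similar :: "nat \<Rightarrow> (vec \<Rightarrow> vec \<Rightarrow> vec) \<Rightarrow> vec set \<Rightarrow> nat \<Rightarrow> bool" where
  "self_similar p br M q \<longleftrightarrow>
     (\<exists>N \<phi>. virt_endo p br M N \<phi> \<and> lindex p M N = q \<and> simple_ve p br M N \<phi>)"

end

theory Submission
  imports Defs "HOL-Library.FuncSet"
begin

locale zpl =
  fixes p :: nat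
  assumes prime_p: "prime p"
begin

abbreviation "C \<equiv> zp_carrier p"
abbreviation qq :: "nat \<Rightarrow> int" where "qq n \<equiv> int p ^ n"

lemma p_ge2: "p \<ge> 2" using prime_p prime_ge_2_nat by blast
lemma qq_pos[simp]: "qq n > 0" using p_ge2 by simp
lemma qq_nz[simp]: "qq n \<noteq> 0" using qq_pos by (metis less_irrefl)
lemma qq_dvd: "n \<le> m \<Longrightarrow> qq n dvd qq m" by (simp add: le_imp_power_dvd)
lemma qq_Suc_dvd[simp]: "qq n dvd qq (Suc n)" by (simp add: qq_dvd)

lemma CD: "x \<in> C \<Longrightarrow> 0 \<le> x n \<and> x n < qq n \<and> x n = x (Suc n) mod qq n"
  unfolding zp_carrier_def by blast

lemma C_mod[simp]: "x \<in> C \<Longrightarrow> x n mod qq n = x n"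
  using CD[of x n] by simp

lemma C_lev: assumes "x \<in> C" "n \<le> m" shows "x m mod qq n = x n"
  using assms(2)
proof (induction m rule: dec_induct)
  case base then show ?case using assms by simp
next
  case (step m)
  have "x m = x (Suc m) mod qq m" using CD[OF assms(1)] by blast
  then have "x m mod qq n = x (Suc m) mod qq n"
    using step.hyps(1) by (simp add: mod_mod_cancel qq_dvd)
  then show ?case using step by simp
qed

lemma C_0[simp]: "x \<in> C \<Longrightarrow> x 0 = 0"
  using CD[of x 0] by simp

lemma mkC:
  assumes "\<And>n. f n = g n mod qq n"
    and "\<And>n. g (Suc n) mod qq n = g n mod qq n"
  shows "f \<in> C"
  unfolding zp_carrier_def
proof (intro CollectI allI conjI)
  fix n
  show "0 \<le> f n" "f n < qq n" using assms(1)[of n] qq_pos[of n] by (metis pos_mod_sign, metis pos_mod_bound)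
  have "f (Suc n) mod qq n = g (Suc n) mod qq n"
    using assms(1)[of "Suc n"] by (simp add: mod_mod_cancel)
  then show "f n = f (Suc n) mod qq n" using assms by simp
qed

lemma C_Suc_mod: "x \<in> C \<Longrightarrow> x (Suc n) mod qq n = x n"
  using C_lev by simp

lemma zero_C[simp]: "zp_zero \<in> C"
  by (rule mkC[where g="\<lambda>n. 0"]) (simp_all add: zp_zero_def)

lemma one_C[simp]: "zp_one p \<in> C"
  by (rule mkC[where g="\<lambda>n. 1"]) (simp_all add: zp_one_def)

lemma add_C[simp]: "x \<in> C \<Longrightarrow> y \<in> C \<Longrightarrow> zp_add p x y \<in> C"
  apply (rule mkC[where g="\<lambda>n. x n + y n"])
   apply (simp add: zp_add_def)
  apply (metis C_Suc_mod mod_add_eq)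
  done

lemma neg_C[simp]: "x \<in> C \<Longrightarrow> zp_neg p x \<in> C"
  apply (rule mkC[where g="\<lambda>n. - x n"])
   apply (simp add: zp_neg_def)
  apply (metis C_Suc_mod mod_minus_eq)
  done

lemma mul_C[simp]: "x \<in> C \<Longrightarrow> y \<in> C \<Longrightarrow> zp_mul p x y \<in> C"
  apply (rule mkC[where g="\<lambda>n. x n * y n"])
   apply (simp add: zp_mul_def)
  apply (metis C_Suc_mod mod_mult_eq)
  done

definition zpn :: "int \<Rightarrow> zp" where "zpn k = (\<lambda>n. k mod qq n)"

lemma zpn_C[simp]: "zpn k \<in> C"
  by (rule mkC[where g="\<lambda>n. k"]) (simp_all add: zpn_def mod_mod_cancel)


abbreviation zadd (infixl "\<oplus>" 65) where "x \<oplus> y \<equiv> zp_add p x y"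
abbreviation zmul (infixl "\<otimes>" 70) where "x \<otimes> y \<equiv> zp_mul p x y"
abbreviation zneg where "zneg x \<equiv> zp_neg p x"
abbreviation zone where "zone \<equiv> zp_one p"

lemma add_comm: "x \<oplus> y = y \<oplus> x"
  by (rule ext) (simp add: zp_add_def algebra_simps)
lemma add_assoc: "(x \<oplus> y) \<oplus> z = x \<oplus> (y \<oplus> z)"
  by (rule ext) (simp add: zp_add_def mod_simps algebra_simps)
lemma add_lcomm: "x \<oplus> (y \<oplus> z) = y \<oplus> (x \<oplus> z)"
  by (metis add_assoc add_comm)
lemma add_zero[simp]: "x \<in> C \<Longrightarrow> x \<oplus> zp_zero = x"
  by (rule ext) (simp add: zp_add_def zp_zero_def)
lemma zero_add[simp]: "x \<in> C \<Longrightarrow> zp_zero \<oplus> x = x"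
  by (rule ext) (simp add: zp_add_def zp_zero_def)
lemma add_neg[simp]: "x \<in> C \<Longrightarrow> x \<oplus> zneg x = zp_zero"
  by (rule ext) (simp add: zp_add_def zp_neg_def zp_zero_def mod_simps)
lemma neg_add[simp]: "x \<in> C \<Longrightarrow> zneg x \<oplus> x = zp_zero"
  by (rule ext) (simp add: zp_add_def zp_neg_def zp_zero_def mod_simps)
lemma mul_comm: "x \<otimes> y = y \<otimes> x"
  by (rule ext) (simp add: zp_mul_def algebra_simps)
lemma mul_assoc: "(x \<otimes> y) \<otimes> z = x \<otimes> (y \<otimes> z)"
  by (rule ext) (simp add: zp_mul_def mod_simps algebra_simps)
lemma mul_lcomm: "x \<otimes> (y \<otimes> z) = y \<otimes> (x \<otimes> z)"
  by (metis mul_assoc mul_comm)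
lemma mul_one[simp]: "x \<in> C \<Longrightarrow> x \<otimes> zone = x"
  by (rule ext) (simp add: zp_mul_def zp_one_def mod_simps)
lemma one_mul[simp]: "x \<in> C \<Longrightarrow> zone \<otimes> x = x"
  by (rule ext) (simp add: zp_mul_def zp_one_def mod_simps)
lemma mul_zero[simp]: "x \<otimes> zp_zero = zp_zero"
  by (rule ext) (simp add: zp_mul_def zp_zero_def)
lemma zero_mul[simp]: "zp_zero \<otimes> x = zp_zero"
  by (rule ext) (simp add: zp_mul_def zp_zero_def)
lemma distl: "x \<otimes> (y \<oplus> z) = x \<otimes> y \<oplus> x \<otimes> z"
  by (rule ext) (simp add: zp_mul_def zp_add_def mod_simps algebra_simps)
lemma distr: "(y \<oplus> z) \<otimes> x = y \<otimes> x \<oplus> z \<otimes> x"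
  by (rule ext) (simp add: zp_mul_def zp_add_def mod_simps algebra_simps)
lemma neg_mul: "zneg x \<otimes> y = zneg (x \<otimes> y)"
  by (rule ext) (simp add: zp_mul_def zp_neg_def mod_simps algebra_simps)
lemma mul_neg: "y \<otimes> zneg x = zneg (y \<otimes> x)"
  by (rule ext) (simp add: zp_mul_def zp_neg_def mod_simps algebra_simps)
lemma neg_add_distrib: "zneg (x \<oplus> y) = zneg x \<oplus> zneg y"
  by (rule ext) (simp add: zp_add_def zp_neg_def mod_simps algebra_simps)
lemma neg_neg[simp]: "x \<in> C \<Longrightarrow> zneg (zneg x) = x"
  by (rule ext) (simp add: zp_neg_def mod_simps)
lemma neg_zero[simp]: "zneg zp_zero = zp_zero"
  by (rule ext) (simp add: zp_neg_def zp_zero_def)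

lemma zpn_add: "zpn k \<oplus> zpn l = zpn (k + l)"
  by (rule ext) (simp add: zp_add_def zpn_def mod_simps)
lemma zpn_mul: "zpn k \<otimes> zpn l = zpn (k * l)"
  by (rule ext) (simp add: zp_mul_def zpn_def mod_simps)
lemma zpn_neg: "zneg (zpn k) = zpn (- k)"
  by (rule ext) (simp add: zp_neg_def zpn_def mod_simps)
lemma zpn_0[simp]: "zpn 0 = zp_zero"
  by (rule ext) (simp add: zpn_def zp_zero_def)
lemma zpn_1[simp]: "zpn 1 = zone"
  by (rule ext) (simp add: zpn_def zp_one_def)

lemma add_cancel_left: "x \<in> C \<Longrightarrow> y \<in> C \<Longrightarrow> z \<in> C \<Longrightarrow> x \<oplus> y = x \<oplus> z \<Longrightarrow> y = z"
  by (metis add_assoc neg_add zero_add)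

lemma eq_iff_sub: "x \<in> C \<Longrightarrow> y \<in> C \<Longrightarrow> (x \<oplus> zneg y = zp_zero) = (x = y)"
  by (metis add_assoc add_neg add_zero neg_add add_comm neg_C)

definition dv :: "nat \<Rightarrow> zp \<Rightarrow> bool" where "dv j z \<longleftrightarrow> z j = 0"

lemma dv_iff: "z \<in> C \<Longrightarrow> dv j z \<longleftrightarrow> (\<forall>n\<ge>j. qq j dvd z n)"
  unfolding dv_def by (metis C_lev dvd_eq_mod_eq_0 order_refl)

lemma dv_at: "z \<in> C \<Longrightarrow> dv j z \<Longrightarrow> j \<le> n \<Longrightarrow> qq j dvd z n"
  using dv_iff by blast

lemma dv_0[simp]: "z \<in> C \<Longrightarrow> dv 0 z"
  by (simp add: dv_def)

lemma dv_mono: "z \<in> C \<Longrightarrow> dv j z \<Longrightarrow> i \<le> j \<Longrightarrow> dv i z"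
  unfolding dv_def by (metis C_lev mod_0)

lemma dv_zero[simp]: "dv j zp_zero" by (simp add: dv_def zp_zero_def)

lemma dv_add: "dv j x \<Longrightarrow> dv j y \<Longrightarrow> dv j (x \<oplus> y)"
  by (simp add: dv_def zp_add_def)
lemma dv_neg: "dv j x \<Longrightarrow> dv j (zneg x)"
  by (simp add: dv_def zp_neg_def)
lemma dv_mulL: "dv j x \<Longrightarrow> dv j (x \<otimes> y)"
  by (simp add: dv_def zp_mul_def)
lemma dv_mulR: "dv j y \<Longrightarrow> dv j (x \<otimes> y)"
  by (simp add: dv_def zp_mul_def)

lemma dv_mul: assumes "x \<in> C" "y \<in> C" "dv i x" "dv j y" shows "dv (i+j) (x \<otimes> y)"
proof -
  have "qq i dvd x (i+j)" "qq j dvd y (i+j)" using assms dv_at by auto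
  then have "qq (i+j) dvd x (i+j) * y (i+j)" by (simp add: power_add mult_dvd_mono)
  then show ?thesis by (simp add: dv_def zp_mul_def)
qed

lemma dv_zpn: "dv j (zpn k) \<longleftrightarrow> qq j dvd k"
  by (simp add: dv_def zpn_def dvd_eq_mod_eq_0)

abbreviation PP :: "nat \<Rightarrow> zp" where "PP j \<equiv> zpn (int p ^ j)"

lemma PP_mul: "PP i \<otimes> PP j = PP (i + j)"
  by (simp add: zpn_mul power_add)

lemma dv_PP: "dv j (PP j)" by (simp add: dv_zpn)

lemma dv_PP_mul: assumes "x \<in> C" shows "dv (i + j) (PP i \<otimes> x) \<longleftrightarrow> dv j x"
proof
  assume "dv j x" then show "dv (i + j) (PP i \<otimes> x)" using dv_mul[of "PP i" x i j] dv_PP assms by simp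
next
  assume h: "dv (i + j) (PP i \<otimes> x)"
  have "(int p ^ i mod qq (i+j) * x (i+j)) mod qq (i+j) = 0"
    using h by (simp add: dv_def zp_mul_def zpn_def)
  then have "qq (i+j) dvd int p ^ i * x (i+j)" by (simp add: mod_simps dvd_eq_mod_eq_0)
  then have "qq i * qq j dvd qq i * x (i+j)" by (simp add: power_add)
  then have "qq j dvd x (i+j)" using qq_nz by (meson dvd_mult_cancel_left)
  then show "dv j x" unfolding dv_def using C_lev[OF assms, of j "i+j"] by (simp add: dvd_eq_mod_eq_0)
qed


lemma prime_int: "prime (int p)" using prime_p by (simp add: prime_nat_int_transfer)

lemma division: assumes "z \<in> C" "dv j z" shows "\<exists>z'\<in>C. z = PP j \<otimes> z'"
proof -
  define g where "g n = z (n + j) div qq j" for n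
  have dvz: "qq j dvd z (n + j)" for n using dv_at[OF assms] by simp
  have gmul: "z (n + j) = qq j * g n" for n using dvz[of n] unfolding g_def by simp
  have gc: "g (Suc n) mod qq n = g n mod qq n" for n
  proof -
    have "z (n + j) = z (Suc (n + j)) mod qq (n + j)" using CD[OF assms(1)] by blast
    also have "\<dots> = (qq j * g (Suc n)) mod (qq j * qq n)" using gmul[of "Suc n"] by (simp add: power_add mult.commute)
    also have "\<dots> = qq j * (g (Suc n) mod qq n)" by (rule mod_mult_mult1)
    finally have "qq j * g n = qq j * (g (Suc n) mod qq n)" using gmul by simp
    then have "g n = g (Suc n) mod qq n" using qq_nz[of j] by (metis mult_cancel_left)
    then show ?thesis by simp
  qed
  define z' where "z' n = g n mod qq n" for n
  have zC: "z' \<in> C" by (rule mkC[of z' g]) (simp_all add: z'_def gc)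
  have "z = PP j \<otimes> z'"
  proof (rule ext)
    fix n
    have "(PP j \<otimes> z') n = (int p ^ j * g n) mod qq n"
      by (simp add: zp_mul_def zpn_def z'_def mod_simps)
    also have "\<dots> = z (n + j) mod qq n" using gmul by simp
    also have "\<dots> = z n" using C_lev[OF assms(1)] by simp
    finally show "z n = (PP j \<otimes> z') n" by simp
  qed
  then show ?thesis using zC by blast
qed

lemma C_eq_zero: "z \<in> C \<Longrightarrow> (\<forall>j. dv j z) \<Longrightarrow> z = zp_zero"
  by (rule ext) (simp add: dv_def zp_zero_def)

lemma valuation: assumes "z \<in> C" "z \<noteq> zp_zero"
  shows "\<exists>j z'. z' \<in> C \<and> \<not> dv 1 z' \<and> z = PP j \<otimes> z'"
proof -
  have ex: "\<exists>j. \<not> dv (Suc j) z"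
  proof (rule ccontr)
    assume "\<not> ?thesis"
    then have "\<forall>j. dv j z" by (metis assms(1) dv_0 not0_implies_Suc)
    then show False using C_eq_zero assms by blast
  qed
  define j where "j = (LEAST j. \<not> dv (Suc j) z)"
  have nj: "\<not> dv (Suc j) z" unfolding j_def by (rule LeastI_ex[OF ex])
  have dj: "dv j z"
  proof (cases j)
    case 0 then show ?thesis using assms by simp
  next
    case (Suc i)
    then have "i < j" by simp
    then have "dv (Suc i) z" unfolding j_def using not_less_Least by blast
    then show ?thesis using Suc by simp
  qed
  obtain z' where z': "z' \<in> C" "z = PP j \<otimes> z'" using division[OF assms(1) dj] by blast
  have "\<not> dv 1 z'"
  proof
    assume "dv 1 z'"
    then have "dv (j + 1) (PP j \<otimes> z')" using dv_PP_mul[OF z'(1)] by blast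
    then show False using nj z' by simp
  qed
  then show ?thesis using z' by blast
qed

lemma unit_level: assumes "z \<in> C" "\<not> dv 1 z" "n \<ge> 1" shows "\<not> int p dvd z n"
proof
  assume h: "int p dvd z n"
  have "z n mod qq 1 = z 1" using C_lev[OF assms(1) assms(3)] .
  then have "z 1 = 0" using h by (simp add: dvd_eq_mod_eq_0)
  then show False using assms(2) by (simp add: dv_def)
qed

lemma inv_unique: "(a * w1) mod m = 1 mod m \<Longrightarrow> (a * w2) mod m = 1 mod m \<Longrightarrow> w1 mod m = w2 mod (m::int)"
proof -
  assume h1: "(a * w1) mod m = 1 mod m" and h2: "(a * w2) mod m = 1 mod m"
  have "w1 mod m = (w1 * ((a * w2) mod m)) mod m" using h2 by (simp add: mod_simps)
  also have "\<dots> = (((a * w1) mod m) * w2) mod m" by (simp add: mod_simps algebra_simps)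
  also have "\<dots> = w2 mod m" using h1 by (simp add: mod_simps)
  finally show ?thesis .
qed

lemma unit_inv: assumes "z \<in> C" "\<not> dv 1 z" shows "\<exists>w\<in>C. z \<otimes> w = zone"
proof -
  have ex: "\<exists>w. 0 \<le> w \<and> w < qq n \<and> (z n * w) mod qq n = 1 mod qq n" for n
  proof -
    have "coprime (z n) (int p ^ n)"
    proof (cases "n = 0")
      case True then show ?thesis by simp
    next
      case False
      then show ?thesis using prime_imp_power_coprime_int[OF prime_int unit_level[OF assms, of n], of n] by simp
    qed
    then have "gcd (z n) (qq n) = 1" by simp
    then obtain u v where "u * z n + v * qq n = 1" using bezout_int[of "z n" "qq n"] by auto
    then have "(z n * u) mod qq n = 1 mod qq n"
      by (metis add.commute mod_mult_self2 mult.commute)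
    then have "(z n * (u mod qq n)) mod qq n = 1 mod qq n" by (simp add: mod_simps)
    moreover have "0 \<le> u mod qq n" "u mod qq n < qq n" using qq_pos[of n] by (metis pos_mod_sign, metis pos_mod_bound)
    ultimately show ?thesis by blast
  qed
  define w where "w n = (SOME w. 0 \<le> w \<and> w < qq n \<and> (z n * w) mod qq n = 1 mod qq n)" for n
  have wp: "0 \<le> w n \<and> w n < qq n \<and> (z n * w n) mod qq n = 1 mod qq n" for n
    unfolding w_def by (rule someI_ex[OF ex])
  have wm: "w n mod qq n = w n" for n using wp[of n] by simp
  have wc: "w (Suc n) mod qq n = w n mod qq n" for n
  proof -
    have "(z n * w (Suc n)) mod qq n = ((z (Suc n) mod qq n) * w (Suc n)) mod qq n"
      using C_Suc_mod[OF assms(1)] by simp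
    also have "\<dots> = ((z (Suc n) * w (Suc n)) mod qq (Suc n)) mod qq n"
      by (simp add: mod_simps mod_mod_cancel)
    also have "\<dots> = (1 mod qq (Suc n)) mod qq n" using wp[of "Suc n"] by simp
    also have "\<dots> = 1 mod qq n" by (simp add: mod_mod_cancel)
    finally have "(z n * w (Suc n)) mod qq n = 1 mod qq n" .
    then have "w (Suc n) mod qq n = w n mod qq n" using inv_unique wp[of n] by blast
    then show ?thesis .
  qed
  have wC: "w \<in> C" by (rule mkC[of w w]) (simp_all add: wm wc)
  have "z \<otimes> w = zone"
    by (rule ext) (simp add: zp_mul_def zp_one_def wp)
  then show ?thesis using wC by blast
qed

lemma unit_mul: assumes "x \<in> C" "y \<in> C" "\<not> dv 1 x" "\<not> dv 1 y" shows "\<not> dv 1 (x \<otimes> y)"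
proof
  assume "dv 1 (x \<otimes> y)"
  then have "int p dvd x 1 * y 1" by (simp add: dv_def zp_mul_def dvd_eq_mod_eq_0)
  then show False using unit_level[OF assms(1,3), of 1] unit_level[OF assms(2,4), of 1] prime_int
    by (simp add: prime_dvd_mult_iff)
qed

lemma PP_unit_nz: assumes "u \<in> C" "\<not> dv 1 u" shows "PP j \<otimes> u \<noteq> zp_zero"
proof
  assume "PP j \<otimes> u = zp_zero"
  then have "dv (j + 1) (PP j \<otimes> u)" by simp
  then show False using dv_PP_mul[OF assms(1)] assms(2) by blast
qed

lemma domain: assumes "x \<in> C" "y \<in> C" "x \<otimes> y = zp_zero" shows "x = zp_zero \<or> y = zp_zero"
proof (rule ccontr)
  assume "\<not> ?thesis"
  then obtain i x' j y' where x': "x' \<in> C" "\<not> dv 1 x'" "x = PP i \<otimes> x'"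
    and y': "y' \<in> C" "\<not> dv 1 y'" "y = PP j \<otimes> y'"
    using valuation assms by meson
  have "x \<otimes> y = PP (i + j) \<otimes> (x' \<otimes> y')"
    using x' y' by (simp add: PP_mul[symmetric] mul_assoc mul_lcomm)
  moreover have "PP (i + j) \<otimes> (x' \<otimes> y') \<noteq> zp_zero"
    using PP_unit_nz[OF mul_C[OF x'(1) y'(1)] unit_mul[OF x'(1) y'(1) x'(2) y'(2)]] by blast
  ultimately show False using assms(3) by simp
qed

lemma mul_cancel: assumes "c \<in> C" "x \<in> C" "y \<in> C" "c \<noteq> zp_zero" "c \<otimes> x = c \<otimes> y" shows "x = y"
proof -
  have "c \<otimes> (x \<oplus> zneg y) = zp_zero" using assms
    by (simp add: distl mul_neg)
  then have "x \<oplus> zneg y = zp_zero" using domain assms by (meson add_C neg_C)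
  then show ?thesis using eq_iff_sub assms by blast
qed

end

lemma sum_mod_cong: "(\<And>x. x \<in> A \<Longrightarrow> f x mod (m::int) = g x mod m) \<Longrightarrow> sum f A mod m = sum g A mod m"
  by (metis (mono_tags, lifting) mod_sum_eq sum.cong)

lemma mm_mod: "(x * (y mod m) - z * (w mod m)) mod m = (x * y - z * w) mod (m::int)"
  by (metis mod_diff_eq mod_mult_right_eq)

lemma sum_dd: "finite A \<Longrightarrow> finite B \<Longrightarrow>
  (\<Sum>i\<in>A. \<Sum>j\<in>B. if i = i0 \<and> j = j0 then c else 0) = (if i0 \<in> A \<and> j0 \<in> B then c else (0::'a::comm_monoid_add))"
proof -
  assume f: "finite A" "finite B"
  have "(\<Sum>i\<in>A. \<Sum>j\<in>B. if i = i0 \<and> j = j0 then c else 0) = (\<Sum>i\<in>A. if i = i0 then (\<Sum>j\<in>B. if j = j0 then c else 0) else 0)"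
    by (rule sum.cong) auto
  then show ?thesis using f by (simp add: sum.delta)
qed

lemma sum_dd': "finite A \<Longrightarrow> finite B \<Longrightarrow>
  (\<Sum>i\<in>A. \<Sum>j\<in>B. if j = j0 \<and> i = i0 then c else 0) = (if i0 \<in> A \<and> j0 \<in> B then c else (0::'a::comm_monoid_add))"
  using sum_dd[of A B i0 j0 c] by (simp add: conj_commute)

locale lie = zpl +
  fixes d :: nat and a :: "nat \<Rightarrow> zp"
  assumes d2: "d \<ge> 2"
    and aC: "\<forall>k\<in>{1..d}. a k \<in> zp_carrier p"
    and ad: "a d \<noteq> zp_zero"
begin

abbreviation "Lc \<equiv> Lcar p d"
abbreviation "br \<equiv> Lbr p d a"

lemma aC'[simp]: "1 \<le> k \<Longrightarrow> k \<le> d \<Longrightarrow> a k \<in> C" using aC by auto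

definition Dv :: "vec \<Rightarrow> vec" where
  "Dv w = (\<lambda>k. if 1 \<le> k \<and> k \<le> d then a k \<otimes> w 1 \<oplus> (if k < d then w (Suc k) else zp_zero) else zp_zero)"

lemma sc_level:
  assumes "1 \<le> k" "k \<le> d"
  shows "sc p d a i j k n mod qq n =
    ((if i = 0 \<and> j = 1 then a k n else 0) - (if i = 1 \<and> j = 0 then a k n else 0)
     + (if i = 0 \<and> j = Suc k \<and> k < d then 1 else 0) - (if j = 0 \<and> i = Suc k \<and> k < d then 1 else 0)) mod qq n"
  using assms
  by (auto simp: sc_def zp_neg_def zp_one_def zp_zero_def mod_simps)

lemma sc_level0: "sc p d a i j 0 n = 0"
  by (auto simp: sc_def zp_zero_def)

lemma LcD: "v \<in> Lc \<Longrightarrow> (i \<le> d \<longrightarrow> v i \<in> C) \<and> (d < i \<longrightarrow> v i = zp_zero)"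
  unfolding Lcar_def by blast

lemma Lc_C: "v \<in> Lc \<Longrightarrow> i \<le> d \<Longrightarrow> v i \<in> C" using LcD by blast
lemma Lc_C': "v \<in> Lc \<Longrightarrow> v i \<in> C"
  using LcD[of v i] by (cases "i \<le> d") auto
lemma Lc_out: "v \<in> Lc \<Longrightarrow> d < i \<Longrightarrow> v i = zp_zero" using LcD by blast

lemma br_formula:
  assumes u: "u \<in> Lc" and v: "v \<in> Lc"
  shows "br u v = vsub p (vsmul p (u 0) (Dv v)) (vsmul p (v 0) (Dv u))"
proof (rule ext)
  fix k
  show "br u v k = vsub p (vsmul p (u 0) (Dv v)) (vsmul p (v 0) (Dv u)) k"
  proof (cases "1 \<le> k \<and> k \<le> d")
    case False
    then have "k = 0 \<or> d < k" by auto
    then show ?thesis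
    proof
      assume k0: "k = 0"
      have "br u v k = zp_zero" unfolding k0 Lbr_def sc_level0 by (rule ext) (simp add: zp_zero_def)
      moreover have "Dv v k = zp_zero" "Dv u k = zp_zero" using k0 by (simp_all add: Dv_def)
      ultimately show ?thesis by (simp add: vsub_def vsmul_def)
    next
      assume "d < k"
      then have "br u v k = zp_zero" by (simp add: Lbr_def)
      moreover have "Dv v k = zp_zero" "Dv u k = zp_zero" using \<open>d < k\<close> by (simp_all add: Dv_def)
      ultimately show ?thesis by (simp add: vsub_def vsmul_def)
    qed
  next
    case True
    then have k1: "1 \<le> k" and kd: "k \<le> d" by auto
    show ?thesis
    proof (rule ext)
      fix n
      define sci where "sci i j = ((if i = 0 \<and> j = 1 then a k n else 0) - (if i = 1 \<and> j = 0 then a k n else 0)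
     + (if i = 0 \<and> j = Suc k \<and> k < d then 1 else 0) - (if j = 0 \<and> i = Suc k \<and> k < d then 1 else 0))" for i j :: nat
      have "br u v k n = (\<Sum>i\<le>d. \<Sum>j\<le>d. u i n * v j n * sc p d a i j k n) mod qq n"
        using kd by (simp add: Lbr_def)
      also have "\<dots> = (\<Sum>i\<le>d. \<Sum>j\<le>d. u i n * v j n * sci i j) mod qq n"
        apply (rule sum_mod_cong)+
        using sc_level[OF k1 kd] unfolding sci_def by (metis mod_mult_right_eq)
      also have "(\<Sum>i\<le>d. \<Sum>j\<le>d. u i n * v j n * sci i j) =
          u 0 n * v 1 n * a k n - u 1 n * v 0 n * a k n
          + (if k < d then u 0 n * v (Suc k) n - u (Suc k) n * v 0 n else 0)"
        using d2 k1 kd unfolding sci_def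
        by (simp add: algebra_simps sum.distrib sum_subtractf if_distrib[of "\<lambda>x. _ * x"] sum.delta sum_dd sum_dd' cong: if_cong)
      finally have L: "br u v k n = (u 0 n * v 1 n * a k n - u 1 n * v 0 n * a k n
          + (if k < d then u 0 n * v (Suc k) n - u (Suc k) n * v 0 n else 0)) mod qq n" .
      have R: "vsub p (vsmul p (u 0) (Dv v)) (vsmul p (v 0) (Dv u)) k n =
          (u 0 n * (a k n * v 1 n + (if k < d then v (Suc k) n else 0))
           - v 0 n * (a k n * u 1 n + (if k < d then u (Suc k) n else 0))) mod qq n"
        using k1 kd by (simp add: vsub_def vsmul_def Dv_def zp_add_def zp_neg_def zp_mul_def zp_zero_def mod_simps mm_mod)
      show "br u v k n = vsub p (vsmul p (u 0) (Dv v)) (vsmul p (v 0) (Dv u)) k n"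
        unfolding L R by (cases "k < d") (simp_all add: algebra_simps)
    qed
  qed
qed

end

context lie
begin

lemma vadd_app[simp]: "vadd p u v i = u i \<oplus> v i" by (simp add: vadd_def)
lemma vsmul_app[simp]: "vsmul p r v i = r \<otimes> v i" by (simp add: vsmul_def)
lemma vsub_app[simp]: "vsub p u v i = u i \<oplus> zneg (v i)" by (simp add: vsub_def)
lemma vzero_app[simp]: "vzero i = zp_zero" by (simp add: vzero_def)

lemmas vapps = vadd_app vsmul_app vsub_app vzero_app

lemma LcI: "(\<And>i. i \<le> d \<Longrightarrow> v i \<in> C) \<Longrightarrow> (\<And>i. d < i \<Longrightarrow> v i = zp_zero) \<Longrightarrow> v \<in> Lc"
  unfolding Lcar_def by blast

lemma vzero_Lc[simp]: "vzero \<in> Lc" by (rule LcI) auto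
lemma vadd_Lc[simp]: "u \<in> Lc \<Longrightarrow> v \<in> Lc \<Longrightarrow> vadd p u v \<in> Lc"
  by (rule LcI) (auto simp: Lc_C Lc_out)
lemma vsmul_Lc[simp]: "r \<in> C \<Longrightarrow> v \<in> Lc \<Longrightarrow> vsmul p r v \<in> Lc"
  by (rule LcI) (auto simp: Lc_C Lc_out)
lemma vsub_Lc[simp]: "u \<in> Lc \<Longrightarrow> v \<in> Lc \<Longrightarrow> vsub p u v \<in> Lc"
  by (rule LcI) (auto simp: Lc_C Lc_out)
lemma Dv_Lc[simp]: "v \<in> Lc \<Longrightarrow> Dv v \<in> Lc"
  by (rule LcI) (auto simp: Dv_def Lc_C)

definition basis :: "nat \<Rightarrow> vec" where "basis i = (\<lambda>k. if k = i then zone else zp_zero)"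
lemma basis_Lc[simp]: "i \<le> d \<Longrightarrow> basis i \<in> Lc"
  by (rule LcI) (auto simp: basis_def)

lemma vec_eqI: "u \<in> Lc \<Longrightarrow> v \<in> Lc \<Longrightarrow> (\<And>i. i \<le> d \<Longrightarrow> u i = v i) \<Longrightarrow> u = v"
  by (rule ext) (metis Lc_out not_le)

lemma br_Lc[simp]: "u \<in> Lc \<Longrightarrow> v \<in> Lc \<Longrightarrow> br u v \<in> Lc"
  by (simp add: br_formula Lc_C')

lemma vadd_comm: "vadd p u v = vadd p v u" by (rule ext) (simp add: add_comm)
lemma vadd_assoc: "vadd p (vadd p u v) w = vadd p u (vadd p v w)" by (rule ext) (simp add: add_assoc)
lemma vadd_zero[simp]: "u \<in> Lc \<Longrightarrow> vadd p u vzero = u" by (rule ext) (simp add: Lc_C')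
lemma zero_vadd[simp]: "u \<in> Lc \<Longrightarrow> vadd p vzero u = u" by (rule ext) (simp add: Lc_C')
lemma vsmul_vadd: "vsmul p r (vadd p u v) = vadd p (vsmul p r u) (vsmul p r v)" by (rule ext) (simp add: distl)
lemma vsmul_add: "vsmul p (r \<oplus> s) u = vadd p (vsmul p r u) (vsmul p s u)" by (rule ext) (simp add: distr)
lemma vsmul_vsmul: "vsmul p r (vsmul p s u) = vsmul p (r \<otimes> s) u" by (rule ext) (simp add: mul_assoc)
lemma vsmul_one[simp]: "u \<in> Lc \<Longrightarrow> vsmul p zone u = u" by (rule ext) (simp add: Lc_C')
lemma vsmul_zero[simp]: "vsmul p zp_zero u = vzero" by (rule ext) simp
lemma vsmul_vzero[simp]: "vsmul p r vzero = vzero" by (rule ext) simp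
lemma vsub_self[simp]: "u \<in> Lc \<Longrightarrow> vsub p u u = vzero" by (rule ext) (simp add: Lc_C')
lemma vsub_zero[simp]: "u \<in> Lc \<Longrightarrow> vsub p u vzero = u" by (rule ext) (simp add: Lc_C')
lemma vsub_as_add: "u \<in> Lc \<Longrightarrow> v \<in> Lc \<Longrightarrow> vsub p u v = vadd p u (vsmul p (zneg zone) v)"
  by (rule ext) (simp add: Lc_C' neg_mul)
lemma vsub_trans: "x \<in> Lc \<Longrightarrow> y \<in> Lc \<Longrightarrow> z \<in> Lc \<Longrightarrow> vsub p y z = vadd p (vsub p y x) (vsub p x z)"
proof (rule ext)
  fix i assume "x \<in> Lc" "y \<in> Lc" "z \<in> Lc"
  then have c: "x i \<in> C" "y i \<in> C" "z i \<in> C" using Lc_C' by auto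
  have "y i \<oplus> zneg (z i) = y i \<oplus> (zneg (x i) \<oplus> x i) \<oplus> zneg (z i)" using c by simp
  then show "vsub p y z i = vadd p (vsub p y x) (vsub p x z) i" by (simp add: add_assoc)
qed
lemma vsub_eq_zero: "u \<in> Lc \<Longrightarrow> v \<in> Lc \<Longrightarrow> vsub p u v = vzero \<Longrightarrow> u = v"
  by (rule ext) (metis Lc_C' eq_iff_sub vsub_app vzero_app)
lemma vsub_neg: "u \<in> Lc \<Longrightarrow> v \<in> Lc \<Longrightarrow> vsub p v u = vsmul p (zneg zone) (vsub p u v)"
  by (rule ext) (simp add: Lc_C' neg_mul neg_add_distrib add_comm)

lemma Dv_app: "1 \<le> k \<Longrightarrow> k \<le> d \<Longrightarrow> Dv w k = a k \<otimes> w 1 \<oplus> (if k < d then w (Suc k) else zp_zero)"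
  by (simp add: Dv_def)
lemma Dv_0[simp]: "Dv w 0 = zp_zero" by (simp add: Dv_def)

lemma Dv_vadd: "u \<in> Lc \<Longrightarrow> v \<in> Lc \<Longrightarrow> Dv (vadd p u v) = vadd p (Dv u) (Dv v)"
  by (rule ext) (auto simp: Dv_def Lc_C' distl add_assoc add_lcomm)
lemma Dv_vsmul: "r \<in> C \<Longrightarrow> v \<in> Lc \<Longrightarrow> Dv (vsmul p r v) = vsmul p r (Dv v)"
  by (rule ext) (auto simp: Dv_def Lc_C' distl mul_lcomm)
lemma Dv_vzero[simp]: "Dv vzero = vzero"
  by (rule ext) (simp add: Dv_def)

abbreviation "A \<equiv> {v \<in> Lc. v 0 = zp_zero}"

lemma br_A: "v \<in> Lc \<Longrightarrow> w \<in> Lc \<Longrightarrow> w 0 = zp_zero \<Longrightarrow> br v w = vsmul p (v 0) (Dv w)"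
  by (simp add: br_formula Lc_C')
lemma br_AA: "v \<in> Lc \<Longrightarrow> w \<in> Lc \<Longrightarrow> v 0 = zp_zero \<Longrightarrow> w 0 = zp_zero \<Longrightarrow> br v w = vzero"
  by (simp add: br_formula)
lemma br_zero: "v \<in> Lc \<Longrightarrow> br vzero v = vzero"
  by (simp add: br_formula)

end

definition N0s :: "nat \<Rightarrow> nat \<Rightarrow> vec set" where
  "N0s p d = {v \<in> Lcar p d. v 0 1 = 0 \<and> (\<forall>i\<in>{1..d}. v i (d - i) = 0)}"

context lie
begin

abbreviation "N0 \<equiv> N0s p d"

lemma N0_iff: "v \<in> N0 \<longleftrightarrow> v \<in> Lc \<and> dv 1 (v 0) \<and> (\<forall>i\<in>{1..d}. dv (d - i) (v i))"
  by (simp add: N0s_def dv_def)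

lemma N0_Lc: "v \<in> N0 \<Longrightarrow> v \<in> Lc" by (simp add: N0_iff)

lemma Dv_N0: assumes "v \<in> N0" "1 \<le> i" "i < d" shows "dv (d - Suc i) (Dv v i)"
proof -
  have vL: "v \<in> Lc" using assms N0_Lc by blast
  have "dv (d - 1) (v 1)" using assms(1) d2 by (simp add: N0_iff)
  then have h1: "dv (d - Suc i) (v 1)" using dv_mono[of "v 1"] vL assms by (simp add: Lc_C')
  have h2: "dv (d - Suc i) (v (Suc i))" using assms by (simp add: N0_iff)
  show ?thesis using assms h1 h2 by (simp add: Dv_app dv_add dv_mulR)
qed

lemma N0_vzero[simp]: "vzero \<in> N0" by (simp add: N0_iff)
lemma N0_vadd: "u \<in> N0 \<Longrightarrow> v \<in> N0 \<Longrightarrow> vadd p u v \<in> N0"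
  by (simp add: N0_iff dv_add)
lemma N0_vsmul: "r \<in> C \<Longrightarrow> v \<in> N0 \<Longrightarrow> vsmul p r v \<in> N0"
  by (simp add: N0_iff dv_mulR)
lemma N0_vsub: "u \<in> N0 \<Longrightarrow> v \<in> N0 \<Longrightarrow> vsub p u v \<in> N0"
  by (simp add: N0_iff dv_add dv_neg)

lemma N0_br: assumes "u \<in> N0" "v \<in> N0" shows "br u v \<in> N0"
proof -
  have uL: "u \<in> Lc" and vL: "v \<in> Lc" using assms N0_Lc by auto
  have key: "dv (d - i) (x 0 \<otimes> Dv y i)" if "x \<in> N0" "y \<in> N0" "1 \<le> i" "i \<le> d" for x y i
  proof (cases "i = d")
    case True then show ?thesis by (simp add: dv_def zp_mul_def)
  next
    case False
    then have "i < d" using that by simp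
    have "dv (1 + (d - Suc i)) (x 0 \<otimes> Dv y i)"
      apply (rule dv_mul)
      using that \<open>i < d\<close> Dv_N0[of y i] N0_Lc[of x] N0_Lc[of y] by (auto simp: N0_iff Lc_C' intro: Lc_C')
    moreover have "1 + (d - Suc i) = d - i" using \<open>i < d\<close> by simp
    ultimately show ?thesis by simp
  qed
  show ?thesis unfolding br_formula[OF uL vL] N0_iff
    using uL vL assms key by (auto simp: Lc_C' dv_add dv_neg)
qed

lemma N0_subalg: "subalg p br Lc N0"
  unfolding subalg_def using N0_Lc N0_vadd N0_vsmul N0_br by auto

definition trunc :: "vec \<Rightarrow> vec" where
  "trunc x = (\<lambda>i. if i \<le> d then zpn (x i d) else zp_zero)"

lemma trunc_Lc: "trunc x \<in> Lc" by (rule LcI) (auto simp: trunc_def)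

lemma trunc_diff: assumes "x \<in> Lc" shows "vsub p x (trunc x) \<in> N0"
proof -
  have dd: "dv d (vsub p x (trunc x) i)" if "i \<le> d" for i
    using that by (simp add: dv_def trunc_def zp_add_def zp_neg_def zpn_def mod_simps)
  have c: "vsub p x (trunc x) i \<in> C" for i using assms trunc_Lc vsub_Lc Lc_C' by blast
  show ?thesis unfolding N0_iff using assms trunc_Lc
    using dv_mono[OF c dd] d2 by auto
qed

lemma coset_trunc: assumes "x \<in> Lc"
  shows "{y \<in> Lc. vsub p y x \<in> N0} = {y \<in> Lc. vsub p y (trunc x) \<in> N0}"
proof -
  have t: "trunc x \<in> Lc" by (rule trunc_Lc)
  have dN: "vsub p x (trunc x) \<in> N0" using trunc_diff[OF assms] .
  have dN': "vsub p (trunc x) x \<in> N0" using vsub_neg[OF assms t] N0_vsmul dN by simp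
  show ?thesis
  proof (intro Collect_cong conj_cong refl iffI)
    fix y assume y: "y \<in> Lc" "vsub p y x \<in> N0"
    then show "vsub p y (trunc x) \<in> N0" using vsub_trans[OF assms y(1) t] N0_vadd dN by simp
  next
    fix y assume y: "y \<in> Lc" "vsub p y (trunc x) \<in> N0"
    then show "vsub p y x \<in> N0" using vsub_trans[OF t y(1) assms] N0_vadd dN' by simp
  qed
qed

lemma N0_finite_index: "finite_index p Lc N0"
proof -
  define F where "F g = {y \<in> Lc. vsub p y (\<lambda>i. if i \<le> d then zpn (g i) else zp_zero) \<in> N0}" for g :: "nat \<Rightarrow> int"
  have "cosets p Lc N0 \<subseteq> F ` (PiE {..d} (\<lambda>_. {0..<qq d}))"
  proof
    fix X assume "X \<in> cosets p Lc N0"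
    then obtain x where x: "x \<in> Lc" "X = {y \<in> Lc. vsub p y x \<in> N0}" unfolding cosets_def by blast
    define g where "g = (\<lambda>i. if i \<le> d then x i d else undefined)"
    have "0 \<le> x i d \<and> x i d < qq d" for i using CD[OF Lc_C'[OF x(1)]] by blast
    then have g: "g \<in> PiE {..d} (\<lambda>_. {0..<qq d})" unfolding g_def PiE_iff by (auto simp: extensional_def)
    have "trunc x = (\<lambda>i. if i \<le> d then zpn (g i) else zp_zero)" by (rule ext) (simp add: trunc_def g_def)
    then have "X = F g" using coset_trunc[OF x(1)] x(2) F_def by simp
    then show "X \<in> F ` (PiE {..d} (\<lambda>_. {0..<qq d}))" using g by blast
  qed
  moreover have "finite (PiE {..d} (\<lambda>_. {0..<qq d}))" by (simp add: finite_PiE)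
  ultimately show ?thesis unfolding finite_index_def by (meson finite_imageI finite_subset)
qed

end

context lie
begin

abbreviation "P \<equiv> PP 1"
abbreviation "bd \<equiv> basis d"
definition Dm :: "vec \<Rightarrow> vec" where "Dm w = vsmul p P (Dv w)"
abbreviation "Lam \<equiv> {v \<in> N0. v 0 = zp_zero}"

lemma one_mod_p[simp]: "1 mod int p = 1" using p_ge2 by simp
lemma dv_P[simp]: "dv 1 (zpn (int p))" by (simp add: dv_zpn)
lemma zone_1: "zone 1 = 1" using p_ge2 by (simp add: zp_one_def)
lemma zone_unit[simp]: "\<not> dv 1 zone" using zone_1 by (simp add: dv_def)
lemma dv_P'[simp]: "dv (Suc 0) (zpn (int p))" by (simp add: dv_zpn)
lemma zone_unit'[simp]: "\<not> dv (Suc 0) zone" using zone_unit by simp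

lemma PP_nz: "PP j \<noteq> zp_zero"
proof
  assume "PP j = zp_zero"
  then have "PP j \<otimes> zone = zp_zero" by simp
  moreover have "\<not> dv 1 zone" by simp
  ultimately show False using PP_unit_nz[of zone j] by simp
qed

lemma PP_C[simp]: "PP j \<in> C" by simp

lemma basis_app: "basis i k = (if k = i then zone else zp_zero)" by (simp add: basis_def)

lemma bd_N0: "bd \<in> N0" using d2 by (auto simp: N0_iff basis_app dv_def zp_one_def zp_zero_def)
lemma bd_0[simp]: "bd 0 = zp_zero" using d2 by (simp add: basis_app)
lemma Dv_bd: "Dv bd = basis (d - 1)"
proof (rule ext)
  fix k show "Dv bd k = basis (d - 1) k"
    using d2 by (cases "1 \<le> k \<and> k \<le> d") (auto simp: Dv_def basis_app)
qed

lemma Dv_vsub: "u \<in> Lc \<Longrightarrow> v \<in> Lc \<Longrightarrow> Dv (vsub p u v) = vsub p (Dv u) (Dv v)"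
  by (simp add: vsub_as_add Dv_vadd Dv_vsmul)

lemma D_inj: assumes z: "z \<in> Lc" "z 0 = zp_zero" "Dv z = vzero" shows "z = vzero"
proof -
  have "Dv z d = zp_zero" using z by simp
  moreover have "Dv z d = a d \<otimes> z 1 \<oplus> zp_zero" using d2 by (simp add: Dv_app)
  moreover have "a d \<otimes> z 1 \<in> C" using d2 z by (simp add: Lc_C')
  ultimately have "a d \<otimes> z 1 = zp_zero" by simp
  then have z1: "z 1 = zp_zero" using domain[of "a d" "z 1"] ad d2 z by (simp add: Lc_C')
  have zk: "z (Suc k) = zp_zero" if "1 \<le> k" "k < d" for k
  proof -
    have "Dv z k = zp_zero" using z by simp
    moreover have "Dv z k = a k \<otimes> z 1 \<oplus> z (Suc k)" using that by (simp add: Dv_app)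
    ultimately show ?thesis using z1 z Lc_C'[of z "Suc k"] by simp
  qed
  show ?thesis
  proof (rule vec_eqI[OF z(1)])
    fix i assume "i \<le> d"
    then show "z i = vzero i"
      using z(2) z1 zk[of "i - 1"] by (cases "i \<le> 1") (auto simp: le_Suc_eq)
  qed simp
qed

lemma Dm_Lc[simp]: "w \<in> Lc \<Longrightarrow> Dm w \<in> Lc" by (simp add: Dm_def)
lemma Dm_0[simp]: "Dm w 0 = zp_zero" by (simp add: Dm_def)
lemma Dm_N0: "w \<in> N0 \<Longrightarrow> Dm w \<in> N0"
proof -
  assume w: "w \<in> N0"
  have "dv (d - i) (Dm w i)" if "1 \<le> i" "i \<le> d" for i
  proof (cases "i = d")
    case True then show ?thesis by (simp add: dv_def Dm_def zp_mul_def)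
  next
    case False
    then have "dv (1 + (d - Suc i)) (P \<otimes> Dv w i)"
      using that Dv_N0[OF w, of i] w N0_Lc by (intro dv_mul) (auto simp: dv_PP intro: Lc_C')
    moreover have "1 + (d - Suc i) = d - i" using False that by simp
    ultimately show ?thesis by (simp add: Dm_def)
  qed
  then show ?thesis using w N0_Lc by (auto simp: N0_iff)
qed

lemma Dm_vadd: "u \<in> Lc \<Longrightarrow> v \<in> Lc \<Longrightarrow> Dm (vadd p u v) = vadd p (Dm u) (Dm v)"
  by (simp add: Dm_def Dv_vadd vsmul_vadd)
lemma Dm_vsmul: "r \<in> C \<Longrightarrow> v \<in> Lc \<Longrightarrow> Dm (vsmul p r v) = vsmul p r (Dm v)"
  by (simp add: Dm_def Dv_vsmul vsmul_vsmul mul_comm)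

lemma ideal_A:
  assumes sub: "I \<subseteq> N0" and A0: "\<And>w. w \<in> I \<Longrightarrow> w 0 = zp_zero" and z: "vzero \<in> I"
    and ad: "\<And>x y. x \<in> I \<Longrightarrow> y \<in> I \<Longrightarrow> vadd p x y \<in> I"
    and sm: "\<And>r x. r \<in> C \<Longrightarrow> x \<in> I \<Longrightarrow> vsmul p r x \<in> I"
    and dm: "\<And>w. w \<in> I \<Longrightarrow> Dm w \<in> I"
  shows "lie_ideal p br N0 I"
  unfolding lie_ideal_def
proof (intro conjI ballI)
  fix x y assume x: "x \<in> N0" and y: "y \<in> I"
  have yL: "y \<in> Lc" using sub y N0_Lc by blast
  have xL: "x \<in> Lc" using x N0_Lc by blast
  have "dv 1 (x 0)" using x by (simp add: N0_iff)
  then obtain \<alpha> where al: "\<alpha> \<in> C" "x 0 = P \<otimes> \<alpha>" using division[of "x 0" 1] xL by (auto simp: Lc_C')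
  have "br x y = vsmul p (x 0) (Dv y)" using br_A[OF xL yL A0[OF y]] .
  also have "\<dots> = vsmul p \<alpha> (Dm y)" by (simp add: al Dm_def vsmul_vsmul mul_comm)
  finally show "br x y \<in> I" using sm[OF al(1) dm[OF y]] by simp
qed (use assms in auto)

end

locale ve = lie +
  fixes H :: "vec set" and \<phi> :: "vec \<Rightarrow> vec"
  assumes VE: "virt_endo p (Lbr p d a) (N0s p d) H \<phi>"
    and IDX: "lindex p (N0s p d) H = p"
begin

lemma H_N0: "x \<in> H \<Longrightarrow> x \<in> N0" using VE unfolding virt_endo_def subalg_def by blast
lemma H_Lc: "x \<in> H \<Longrightarrow> x \<in> Lc" using H_N0 N0_Lc by blast
lemma H_vzero[simp]: "vzero \<in> H" using VE unfolding virt_endo_def subalg_def by blast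
lemma H_vadd: "x \<in> H \<Longrightarrow> y \<in> H \<Longrightarrow> vadd p x y \<in> H" using VE unfolding virt_endo_def subalg_def by blast
lemma H_vsmul: "r \<in> C \<Longrightarrow> x \<in> H \<Longrightarrow> vsmul p r x \<in> H" using VE unfolding virt_endo_def subalg_def by blast
lemma H_br: "x \<in> H \<Longrightarrow> y \<in> H \<Longrightarrow> br x y \<in> H" using VE unfolding virt_endo_def subalg_def by blast
lemma H_vsub: "x \<in> H \<Longrightarrow> y \<in> H \<Longrightarrow> vsub p x y \<in> H"
  using vsub_as_add[OF H_Lc H_Lc] H_vadd H_vsmul by simp

lemma phi_N0: "x \<in> H \<Longrightarrow> \<phi> x \<in> N0" using VE unfolding virt_endo_def by blast
lemma phi_Lc: "x \<in> H \<Longrightarrow> \<phi> x \<in> Lc" using phi_N0 N0_Lc by blast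
lemma phi_add: "x \<in> H \<Longrightarrow> y \<in> H \<Longrightarrow> \<phi> (vadd p x y) = vadd p (\<phi> x) (\<phi> y)" using VE unfolding virt_endo_def by blast
lemma phi_smul: "r \<in> C \<Longrightarrow> x \<in> H \<Longrightarrow> \<phi> (vsmul p r x) = vsmul p r (\<phi> x)" using VE unfolding virt_endo_def by blast
lemma phi_br: "x \<in> H \<Longrightarrow> y \<in> H \<Longrightarrow> \<phi> (br x y) = br (\<phi> x) (\<phi> y)" using VE unfolding virt_endo_def by blast
lemma phi_zero[simp]: "\<phi> vzero = vzero"
  using phi_smul[of zp_zero vzero] by simp
lemma phi_sub: "x \<in> H \<Longrightarrow> y \<in> H \<Longrightarrow> \<phi> (vsub p x y) = vsub p (\<phi> x) (\<phi> y)"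
  using vsub_as_add[OF H_Lc H_Lc] vsub_as_add[OF phi_Lc phi_Lc] phi_add phi_smul H_vsmul by simp

lemma fin_cosets: "finite (cosets p N0 H)" using VE unfolding virt_endo_def finite_index_def by blast
lemma card_cosets: "card (cosets p N0 H) = p" using IDX unfolding lindex_def .

lemma count:
  assumes fN: "\<And>j. j \<le> p \<Longrightarrow> f j \<in> N0"
    and fd: "\<And>i j. i < j \<Longrightarrow> j \<le> p \<Longrightarrow> vsub p (f j) (f i) \<notin> H"
  shows False
proof -
  define cs where "cs x = {y \<in> N0. vsub p y x \<in> H}" for x
  have inj: "inj_on (cs \<circ> f) {..p}"
  proof (rule inj_onI)
    have mem: "f j \<in> cs (f j)" if "j \<le> p" for j
      using fN[OF that] N0_Lc vsub_self cs_def by simp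
    have ne: "cs (f i) \<noteq> cs (f j)" if "i < j" "j \<le> p" for i j
      using mem[OF that(2)] fd[OF that] cs_def by auto
    fix i j assume "i \<in> {..p}" "j \<in> {..p}" "(cs \<circ> f) i = (cs \<circ> f) j"
    then show "i = j" using ne by (metis atMost_iff comp_apply linorder_neqE_nat)
  qed
  have sub: "(cs \<circ> f) ` {..p} \<subseteq> cosets p N0 H"
    unfolding cosets_def cs_def using fN by auto
  have "card ((cs \<circ> f) ` {..p}) = Suc p" using card_image[OF inj] by simp
  moreover have "card ((cs \<circ> f) ` {..p}) \<le> p" using card_mono[OF fin_cosets sub] card_cosets by simp
  ultimately show False by simp
qed

lemma vsub_smul_same: "x \<in> Lc \<Longrightarrow> vsub p (vsmul p r x) (vsmul p s x) = vsmul p (r \<oplus> zneg s) x"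
  by (rule ext) (simp add: distr neg_mul)

lemma pN0: assumes x: "x \<in> N0" shows "vsmul p (PP 1) x \<in> H"
proof (rule ccontr)
  assume nH: "vsmul p (PP 1) x \<notin> H"
  define f where "f j = vsmul p (zpn (int j)) x" for j :: nat
  show False
  proof (rule count[of f])
    show "f j \<in> N0" for j using N0_vsmul x f_def by simp
  next
    fix i j :: nat assume ij: "i < j" "j \<le> p"
    have xL: "x \<in> Lc" using x N0_Lc by blast
    have eq: "vsub p (f j) (f i) = vsmul p (zpn (int j - int i)) x"
      unfolding f_def vsub_smul_same[OF xL] by (simp add: zpn_neg zpn_add)
    show "vsub p (f j) (f i) \<notin> H"
    proof
      assume inH: "vsub p (f j) (f i) \<in> H"
      show False
      proof (cases "j - i = p")
        case True
        then have "int j - int i = int p" using ij by simp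
        then show False using inH eq nH by simp
      next
        case False
        then have k: "0 < int j - int i" "int j - int i < int p" using ij by auto
        have "\<not> dv 1 (zpn (int j - int i))"
        proof
          assume "dv 1 (zpn (int j - int i))"
          then have "int p dvd (int j - int i)" by (simp add: dv_zpn)
          then show False using k zdvd_imp_le by fastforce
        qed
        then obtain w where w: "w \<in> C" "zpn (int j - int i) \<otimes> w = zone" using unit_inv[OF zpn_C] by blast
        have "vsmul p w (vsmul p (zpn (int j - int i)) x) \<in> H" using H_vsmul[OF w(1)] inH eq by simp
        then have "x \<in> H" using w xL by (simp add: vsmul_vsmul mul_comm)
        then show False using nH H_vsmul by simp
      qed
    qed
  qed
qed

lemma inv_of: assumes "I \<subseteq> H" "\<phi> ` I \<subseteq> I" shows "invariant N0 H \<phi> I"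
  unfolding invariant_def
proof (intro conjI allI assms(2))
  fix k show "I \<subseteq> pow_dom N0 H \<phi> k"
  proof (induction k)
    case 0 then show ?case using assms H_N0 by auto
  next
    case (Suc k) then show ?case using assms by auto
  qed
qed

end

context lie
begin
abbreviation "y0 \<equiv> vsmul p P (basis 0)"
lemma y0_N0: "y0 \<in> N0"
proof -
  have "dv 1 (y0 0)" by (simp add: basis_app dv_mulL)
  moreover have "y0 i = zp_zero" if "i \<noteq> 0" for i using that by (simp add: basis_app)
  ultimately show ?thesis unfolding N0_iff by auto
qed
lemma y0_0: "y0 0 = P" by (simp add: basis_app)
lemma Lam_Lc: "v \<in> Lam \<Longrightarrow> v \<in> Lc" using N0_Lc by blast
lemma bd_nz: "bd \<noteq> vzero"
proof
  assume "bd = vzero" then have "bd d = zp_zero" by simp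
  then have "zone = zp_zero" by (simp add: basis_app)
  then show False using zone_1 by (simp add: zp_zero_def)
qed
lemma nz_coord: "v k \<noteq> zp_zero \<Longrightarrow> v \<noteq> vzero" by auto
lemma not_dv2_P: "\<not> dv 2 P"
proof
  assume "dv 2 P"
  then have "int p ^ 2 dvd int p" by (simp add: dv_zpn)
  then have "int p * int p \<le> int p * 1" using p_ge2 by (simp add: power2_eq_square zdvd_imp_le)
  then show False using p_ge2 by simp
qed
end

context ve
begin

lemma unit_div: assumes "x \<in> Lc" "k \<in> C" "\<not> dv 1 k" "vsmul p k x \<in> H" shows "x \<in> H"
proof -
  obtain w where w: "w \<in> C" "k \<otimes> w = zone" using unit_inv assms by blast
  have "vsmul p w (vsmul p k x) \<in> H" using H_vsmul[OF w(1)] assms by simp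
  then show ?thesis using w assms by (simp add: vsmul_vsmul mul_comm)
qed

lemma int_unit: "0 < k \<Longrightarrow> k < int p \<Longrightarrow> \<not> dv 1 (zpn k)"
  by (simp add: dv_zpn) (meson zdvd_imp_le not_le)

lemma Lam_sub_H: assumes cp: "\<forall>h\<in>H. dv 2 (h 0)" shows "Lam \<subseteq> H"
proof
  fix u assume u: "u \<in> Lam"
  show "u \<in> H"
  proof (rule ccontr)
    assume nH: "u \<notin> H"
    have uL: "u \<in> Lc" using u Lam_Lc by blast
    define f where "f k = (if k < p then vsmul p (zpn (int k)) u else y0)" for k
    show False
    proof (rule count[of f])
      show "f j \<in> N0" for j using y0_N0 u N0_vsmul f_def by auto
    next
      fix i j assume ij: "i < j" "j \<le> p"
      show "vsub p (f j) (f i) \<notin> H"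
      proof (cases "j < p")
        case True
        have eq: "vsub p (f j) (f i) = vsmul p (zpn (int j - int i)) u"
          using True ij by (simp add: f_def vsub_smul_same[OF uL] zpn_neg zpn_add)
        show ?thesis
        proof
          assume "vsub p (f j) (f i) \<in> H"
          then have "vsmul p (zpn (int j - int i)) u \<in> H" using eq by simp
          moreover have "0 < int j - int i" "int j - int i < int p" using True ij by auto
          ultimately have "u \<in> H" using unit_div[OF uL zpn_C int_unit] by blast
          then show False using nH by simp
        qed
      next
        case False
        then have fj: "f j = y0" "f i = vsmul p (zpn (int i)) u" using ij by (auto simp: f_def)
        have "vsub p (f j) (f i) 0 = P" using fj u by (simp add: basis_app)
        then show ?thesis using cp not_dv2_P by metis
      qed
    qed
  qed
qed

lemma py_H: "vsmul p P y0 \<in> H" using pN0[OF y0_N0] .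
lemma py_0: "vsmul p P y0 0 = PP 2" by (simp add: basis_app zpn_mul power2_eq_square)

lemma case_cp: assumes cp: "\<forall>h\<in>H. dv 2 (h 0)"
  shows "\<exists>I. lie_ideal p br N0 I \<and> invariant N0 H \<phi> I \<and> I \<noteq> {vzero}"
proof (cases "\<forall>u\<in>Lam. \<phi> u 0 = zp_zero")
  case True
  have LH: "Lam \<subseteq> H" using Lam_sub_H[OF cp] .
  have "lie_ideal p br N0 Lam"
  proof (rule ideal_A)
    show "vadd p x y \<in> Lam" if "x \<in> Lam" "y \<in> Lam" for x y using that N0_vadd by simp
    show "vsmul p r x \<in> Lam" if "r \<in> C" "x \<in> Lam" for r x using that N0_vsmul by simp
    show "Dm w \<in> Lam" if "w \<in> Lam" for w using that Dm_N0 by simp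
  qed auto
  moreover have "invariant N0 H \<phi> Lam"
  proof (rule inv_of)
    show "\<phi> ` Lam \<subseteq> Lam" using LH True phi_N0 by blast
  qed (rule LH)
  moreover have "Lam \<noteq> {vzero}" using bd_N0 bd_nz bd_0 by (metis (mono_tags, lifting) mem_Collect_eq singletonD)
  ultimately show ?thesis by blast
next
  case False
  then obtain u where u: "u \<in> Lam" "\<phi> u 0 \<noteq> zp_zero" by blast
  have LH: "Lam \<subseteq> H" using Lam_sub_H[OF cp] .
  define py where "py = vsmul p P y0"
  have pyH: "py \<in> H" using py_H py_def by simp
  have pyL: "py \<in> Lc" using pyH H_Lc by blast
  define J where "J = (\<lambda>l. vsmul p (PP 2) (Dv l)) ` Lam"
  have brpy: "br py l = vsmul p (PP 2) (Dv l)" if "l \<in> Lam" for l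
    using br_A[OF pyL Lam_Lc[OF that]] that py_0 py_def by simp
  have JH: "J \<subseteq> H"
  proof
    fix w assume "w \<in> J"
    then obtain l where l: "l \<in> Lam" "w = vsmul p (PP 2) (Dv l)" unfolding J_def by blast
    then have "w = br py l" using brpy by simp
    then show "w \<in> H" using H_br[OF pyH] LH l by blast
  qed
  have vzJ: "vzero \<in> J"
  proof -
    have "vzero \<in> Lam" by simp
    then have "vsmul p (PP 2) (Dv vzero) \<in> J" unfolding J_def by (rule imageI)
    then show ?thesis by simp
  qed
  have Jk: "\<phi> w = vzero" if wJ: "w \<in> J" for w
  proof -
    obtain l where l0: "l \<in> Lam" "w = vsmul p (PP 2) (Dv l)" using wJ unfolding J_def by blast
    then have l: "l \<in> Lam" "w = br py l" using brpy by auto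
    have lH: "l \<in> H" using LH l by blast
    have wH: "w \<in> H" using l H_br[OF pyH lH] by simp
    have uH: "u \<in> H" using LH u by blast
    have phw: "\<phi> w = br (\<phi> py) (\<phi> l)" using l phi_br[OF pyH lH] by simp
    have phw0: "\<phi> w 0 = zp_zero" using phw br_formula[OF phi_Lc[OF pyH] phi_Lc[OF lH]]
      by (simp add: Lc_C')
    have wA: "w 0 = zp_zero" using l brpy by simp
    have "br u w = vzero" using br_AA[OF H_Lc[OF uH] H_Lc[OF wH]] u wA by simp
    then have "br (\<phi> u) (\<phi> w) = vzero" using phi_br[OF uH wH] by simp
    then have "vsmul p (\<phi> u 0) (Dv (\<phi> w)) = vzero"
      using br_formula[OF phi_Lc[OF uH] phi_Lc[OF wH]] phw0 phi_Lc[OF uH] phi_Lc[OF wH]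
      by (simp add: Lc_C')
    then have "\<forall>k. \<phi> u 0 \<otimes> Dv (\<phi> w) k = zp_zero" by (metis vsmul_app vzero_app)
    then have "\<forall>k. Dv (\<phi> w) k = zp_zero"
      using domain u(2) phi_Lc[OF uH] phi_Lc[OF wH] Dv_Lc Lc_C' by metis
    then have "Dv (\<phi> w) = vzero" by (simp add: vzero_def fun_eq_iff)
    then show ?thesis using D_inj phi_Lc[OF wH] phw0 by blast
  qed
  have "lie_ideal p br N0 J"
  proof (rule ideal_A)
    show "J \<subseteq> N0" using JH H_N0 by blast
    show "w 0 = zp_zero" if "w \<in> J" for w using that unfolding J_def by force
    show "vzero \<in> J" by (rule vzJ)
    show "vadd p x y \<in> J" if xy: "x \<in> J" "y \<in> J" for x y
    proof -
      obtain l1 where l1: "l1 \<in> Lam" "x = vsmul p (PP 2) (Dv l1)" using xy unfolding J_def by blast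
      obtain l2 where l2: "l2 \<in> Lam" "y = vsmul p (PP 2) (Dv l2)" using xy unfolding J_def by blast
      have "vadd p l1 l2 \<in> Lam" using l1 l2 N0_vadd by simp
      then have "vsmul p (PP 2) (Dv (vadd p l1 l2)) \<in> J" unfolding J_def by (rule imageI)
      moreover have "vsmul p (PP 2) (Dv (vadd p l1 l2)) = vadd p x y"
        using l1 l2 by (simp add: Dv_vadd Lam_Lc vsmul_vadd)
      ultimately show ?thesis by simp
    qed
    show "vsmul p r x \<in> J" if rx: "r \<in> C" "x \<in> J" for r x
    proof -
      obtain l where l: "l \<in> Lam" "x = vsmul p (PP 2) (Dv l)" using rx unfolding J_def by blast
      have "vsmul p r l \<in> Lam" using l rx N0_vsmul by simp
      then have "vsmul p (PP 2) (Dv (vsmul p r l)) \<in> J" unfolding J_def by (rule imageI)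
      moreover have "vsmul p (PP 2) (Dv (vsmul p r l)) = vsmul p r x"
        using l rx by (simp add: Dv_vsmul Lam_Lc vsmul_vsmul mul_comm)
      ultimately show ?thesis by simp
    qed
    show "Dm x \<in> J" if xJ: "x \<in> J" for x
    proof -
      obtain l where l: "l \<in> Lam" "x = vsmul p (PP 2) (Dv l)" using xJ unfolding J_def by blast
      have "Dm x = vsmul p (PP 2) (Dv (Dm l))"
        using l by (simp add: Dm_vsmul Lam_Lc) (simp add: Dm_def Dv_vsmul Lam_Lc)
      moreover have "Dm l \<in> Lam" using l Dm_N0 by simp
      ultimately show ?thesis unfolding J_def by simp
    qed
  qed
  moreover have "invariant N0 H \<phi> J"
  proof (rule inv_of)
    show "\<phi> ` J \<subseteq> J" using Jk vzJ by auto
  qed (rule JH)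
  moreover have "J \<noteq> {vzero}"
  proof -
    have "bd \<in> Lam" using bd_N0 by simp
    then have "vsmul p (PP 2) (Dv bd) \<in> J" unfolding J_def by (rule imageI)
    moreover have "vsmul p (PP 2) (Dv bd) (d - 1) \<noteq> zp_zero"
    proof -
      have "vsmul p (PP 2) (Dv bd) (d - 1) = PP 2 \<otimes> zone" by (simp only: Dv_bd basis_app vsmul_app if_True refl simp_thms)
      then show ?thesis using PP_nz[of 2] by simp
    qed
    ultimately show ?thesis by (metis singletonD vzero_app)
  qed
  ultimately show ?thesis by blast
qed

end

context zpl
begin
primrec zpow :: "zp \<Rightarrow> nat \<Rightarrow> zp" where
  "zpow c 0 = zone"
| "zpow c (Suc k) = c \<otimes> zpow c k"

lemma zpow_C[simp]: "c \<in> C \<Longrightarrow> zpow c k \<in> C" by (induction k) auto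

lemma dv_sub_cancel: "x \<in> C \<Longrightarrow> y \<in> C \<Longrightarrow> dv j (x \<oplus> y) \<Longrightarrow> dv j y \<Longrightarrow> dv j x"
proof -
  assume c: "x \<in> C" "y \<in> C" and h: "dv j (x \<oplus> y)" "dv j y"
  have "x = (x \<oplus> y) \<oplus> zneg y" using c by (simp add: add_assoc)
  then show "dv j x" using h dv_add dv_neg by metis
qed

lemma dv1_int: assumes "x \<in> C" "\<not> dv 1 x" "dv 1 (zpn i \<otimes> x)" shows "int p dvd i"
proof -
  have "(i mod int p * x 1) mod int p = 0" using assms(3) by (simp add: dv_def zp_mul_def zpn_def)
  then have "int p dvd i * x 1" by (simp add: mod_simps dvd_eq_mod_eq_0)
  moreover have "\<not> int p dvd x 1" using unit_level[OF assms(1,2), of 1] by simp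
  ultimately show ?thesis using prime_int by (simp add: prime_dvd_mult_iff)
qed

end

context lie
begin

lemma vdiv: assumes w: "w \<in> Lc" "\<And>i. dv j (w i)"
  shows "\<exists>s\<in>Lc. w = vsmul p (PP j) s \<and> (w 0 = zp_zero \<longrightarrow> s 0 = zp_zero)"
proof -
  define s where "s i = (if i \<le> d \<and> w i \<noteq> zp_zero then (SOME z. z \<in> C \<and> w i = PP j \<otimes> z) else zp_zero)" for i
  have sp: "s i \<in> C \<and> w i = PP j \<otimes> s i" if "i \<le> d" for i
  proof (cases "w i = zp_zero")
    case True then show ?thesis by (simp add: s_def)
  next
    case False
    have "\<exists>z. z \<in> C \<and> w i = PP j \<otimes> z" using division[OF Lc_C'[OF w(1)] w(2)] by blast
    then have "(SOME z. z \<in> C \<and> w i = PP j \<otimes> z) \<in> C \<and> w i = PP j \<otimes> (SOME z. z \<in> C \<and> w i = PP j \<otimes> z)"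
      by (rule someI_ex)
    then show ?thesis using False that unfolding s_def by simp
  qed
  have sL: "s \<in> Lc"
  proof (rule LcI)
    show "s i \<in> C" if "i \<le> d" for i using sp[OF that] by blast
    show "s i = zp_zero" if "d < i" for i using that by (simp add: s_def)
  qed
  have "w = vsmul p (PP j) s"
  proof (rule vec_eqI)
    show "w \<in> Lc" by (rule w(1))
    show "vsmul p (PP j) s \<in> Lc" using sL by simp
    show "w i = vsmul p (PP j) s i" if "i \<le> d" for i using sp[OF that] by simp
  qed
  moreover have "w 0 = zp_zero \<longrightarrow> s 0 = zp_zero" by (simp add: s_def)
  ultimately show ?thesis using sL by blast
qed

abbreviation "Gam \<equiv> {v \<in> Lc. v 0 = zp_zero \<and> (\<forall>i. dv d (v i))}"

lemma Gam_N0: assumes "v \<in> Gam" shows "v \<in> N0"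
proof -
  have "dv (d - i) (v i)" for i using assms dv_mono[OF Lc_C'[of v i], of d "d - i"] by simp
  then show ?thesis unfolding N0_iff using assms by simp
qed

lemma Dv_basis: "2 \<le> j \<Longrightarrow> j \<le> d \<Longrightarrow> Dv (basis j) = basis (j - 1)"
proof (rule ext)
  fix k assume "2 \<le> j" "j \<le> d"
  then show "Dv (basis j) k = basis (j - 1) k"
    by (cases "1 \<le> k \<and> k \<le> d") (auto simp: Dv_def basis_app)
qed

end


locale ve1 = ve +
  fixes h0 :: vec and c' :: zp
  assumes h0H: "h0 \<in> H" and h00: "h0 0 = PP 1" and cC: "c' \<in> C"
    and ph0: "\<phi> h0 0 = PP 1 \<otimes> c'"
    and inj: "\<And>u. u \<in> H \<Longrightarrow> u 0 = zp_zero \<Longrightarrow> \<phi> u = vzero \<Longrightarrow> u = vzero"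
begin

declare vapps[simp del]

lemma HA_A: assumes uH: "u \<in> H" and u0: "u 0 = zp_zero" shows "\<phi> u 0 = zp_zero"
proof (rule ccontr)
  assume c1nz: "\<phi> u 0 \<noteq> zp_zero"
  define c1 where "c1 = \<phi> u 0"
  have uL: "u \<in> Lc" using uH H_Lc by blast
  have pu: "\<phi> u \<in> Lc" using phi_Lc[OF uH] .
  have c1C: "c1 \<in> C" using pu c1_def Lc_C' by blast
  have rel: "vsmul p c1 u' = vsmul p (\<phi> u' 0) u" if u'H: "u' \<in> H" and u'0: "u' 0 = zp_zero" for u'
  proof -
    have u'L: "u' \<in> Lc" using u'H H_Lc by blast
    have pu': "\<phi> u' \<in> Lc" using phi_Lc[OF u'H] .
    have "br u u' = vzero" using br_AA[OF uL u'L u0 u'0] .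
    then have "br (\<phi> u) (\<phi> u') = vzero" using phi_br[OF uH u'H] by simp
    then have e: "vsub p (vsmul p c1 (Dv (\<phi> u'))) (vsmul p (\<phi> u' 0) (Dv (\<phi> u))) = vzero"
      using br_formula[OF pu pu'] c1_def by simp
    define z where "z = vsub p (vsmul p c1 u') (vsmul p (\<phi> u' 0) u)"
    have zH: "z \<in> H" unfolding z_def using H_vsub H_vsmul u'H uH c1C Lc_C'[OF pu'] by simp
    have z0: "z 0 = zp_zero" using u0 u'0 by (simp add: z_def vapps)
    have pz: "\<phi> z = vsub p (vsmul p c1 (\<phi> u')) (vsmul p (\<phi> u' 0) (\<phi> u))"
      unfolding z_def using phi_sub phi_smul H_vsmul u'H uH c1C Lc_C'[OF pu'] by simp
    have pzL: "\<phi> z \<in> Lc" using phi_Lc[OF zH] .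
    have "\<phi> z 0 = zp_zero" using pz c1_def c1C Lc_C'[OF pu'] by (simp add: mul_comm vapps)
    moreover have "Dv (\<phi> z) = vzero" using e pz pu pu' c1C Lc_C'[OF pu']
      by (simp add: Dv_vsub Dv_vsmul)
    ultimately have "\<phi> z = vzero" using D_inj pzL by blast
    then have "z = vzero" using inj zH z0 by blast
    then show ?thesis unfolding z_def using vsub_eq_zero uL u'L c1C Lc_C'[OF pu'] by simp
  qed
  define v1 where "v1 = vsmul p P bd"
  define v2 where "v2 = vsmul p P (vsmul p P (basis (d - 1)))"
  have bdm1: "vsmul p P (basis (d - 1)) \<in> N0"
  proof -
    have "dv (d - i) (vsmul p P (basis (d - 1)) i)" if "1 \<le> i" "i \<le> d" for i
    proof (cases "i = d - 1")
      case True then show ?thesis using d2 by (simp add: basis_app dv_mulL vapps)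
    next
      case False then show ?thesis by (simp add: basis_app vapps)
    qed
    moreover have "vsmul p P (basis (d - 1)) 0 = zp_zero" using d2 by (simp add: basis_app vapps)
    ultimately show ?thesis unfolding N0_iff using d2 by simp
  qed
  have v1H: "v1 \<in> H" unfolding v1_def using pN0[OF bd_N0] .
  have v2H: "v2 \<in> H" unfolding v2_def using pN0[OF bdm1] .
  obtain \<alpha> where al: "\<alpha> = \<phi> v1 0" by blast
  obtain \<beta> where be: "\<beta> = \<phi> v2 0" by blast
  have alC: "\<alpha> \<in> C" and beC: "\<beta> \<in> C" using al be phi_Lc v1H v2H Lc_C' by auto
  have r1: "vsmul p c1 v1 = vsmul p \<alpha> u" using rel[OF v1H] al by (simp add: v1_def vapps)
  have r2: "vsmul p c1 v2 = vsmul p \<beta> u" using rel[OF v2H] be d2 by (simp add: v2_def basis_app vapps)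
  have dd: "d - 1 \<noteq> d" using d2 by simp
  have e1: "c1 \<otimes> P = \<alpha> \<otimes> u d" using fun_cong[OF r1, of d] by (simp add: v1_def basis_app vapps)
  have e2: "zp_zero = \<alpha> \<otimes> u (d - 1)" using fun_cong[OF r1, of "d - 1"] dd by (simp add: v1_def basis_app vapps)
  have e3: "zp_zero = \<beta> \<otimes> u d" using fun_cong[OF r2, of d] dd by (simp add: v2_def basis_app vapps)
  have e4: "c1 \<otimes> (P \<otimes> (P \<otimes> zone)) = \<beta> \<otimes> u (d - 1)" using fun_cong[OF r2, of "d - 1"] by (simp add: v2_def basis_app vapps)
  have "c1 \<otimes> P \<noteq> zp_zero" using domain[OF c1C PP_C] c1nz c1_def PP_nz by blast
  then have "u d \<noteq> zp_zero" using e1 by auto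
  then have "\<beta> = zp_zero" using domain[OF beC Lc_C'[OF uL]] e3 by metis
  then have "c1 \<otimes> (P \<otimes> P) = zp_zero" using e4 by simp
  moreover have "P \<otimes> P \<noteq> zp_zero" using PP_nz[of 2] by (simp add: zpn_mul power2_eq_square)
  ultimately show False using domain[OF c1C mul_C[OF PP_C PP_C]] c1nz c1_def by blast
qed

lemma eq1: assumes uH: "u \<in> H" and u0: "u 0 = zp_zero"
  shows "Dm u \<in> H \<and> \<phi> (Dm u) = vsmul p c' (Dm (\<phi> u))"
proof -
  have uL: "u \<in> Lc" using uH H_Lc by blast
  have h0L: "h0 \<in> Lc" using h0H H_Lc by blast
  have bu: "br h0 u = Dm u" using br_A[OF h0L uL u0] h00 by (simp add: Dm_def)
  have "\<phi> (br h0 u) = br (\<phi> h0) (\<phi> u)" using phi_br[OF h0H uH] .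
  also have "\<dots> = vsmul p (\<phi> h0 0) (Dv (\<phi> u))" using br_A[OF phi_Lc[OF h0H] phi_Lc[OF uH] HA_A[OF uH u0]] .
  also have "\<dots> = vsmul p c' (Dm (\<phi> u))" using ph0 by (simp add: Dm_def vsmul_vsmul mul_comm)
  finally show ?thesis using bu H_br[OF h0H uH] by simp
qed

lemma Dm_pow_Lc: "w \<in> Lc \<Longrightarrow> (Dm ^^ k) w \<in> Lc" by (induction k) auto
lemma Dm_pow_N0: "w \<in> N0 \<Longrightarrow> (Dm ^^ k) w \<in> N0" by (induction k) (auto simp: Dm_N0)
lemma Dm_pow_0: "w 0 = zp_zero \<Longrightarrow> (Dm ^^ k) w 0 = zp_zero" by (induction k) auto

lemma iter: assumes uH: "u \<in> H" and u0: "u 0 = zp_zero"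
  shows "(Dm ^^ k) u \<in> H \<and> \<phi> ((Dm ^^ k) u) = vsmul p (zpow c' k) ((Dm ^^ k) (\<phi> u))"
proof (induction k)
  case 0 then show ?case using uH phi_Lc[OF uH] by simp
next
  case (Suc k)
  have h: "(Dm ^^ k) u 0 = zp_zero" using Dm_pow_0 u0 by blast
  have e: "Dm ((Dm ^^ k) u) \<in> H \<and> \<phi> (Dm ((Dm ^^ k) u)) = vsmul p c' (Dm (\<phi> ((Dm ^^ k) u)))"
    using eq1 Suc.IH h by blast
  have L: "(Dm ^^ k) (\<phi> u) \<in> Lc" using Dm_pow_Lc phi_Lc[OF uH] by blast
  show ?case using e Suc.IH L cC by (simp del: vapps add: Dm_vsmul vsmul_vsmul)
qed

definition t :: vec where "t = \<phi> (vsmul p P bd)"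
lemma PbdH: "vsmul p P bd \<in> H" using pN0[OF bd_N0] .
lemma t_Lam: "t \<in> Lam" using phi_N0[OF PbdH] HA_A[OF PbdH] by (simp add: t_def vapps)
lemma t_Lc: "t \<in> Lc" using t_Lam N0_Lc by blast

lemma PP_Suc: "P \<otimes> (PP n \<otimes> x) = PP (Suc n) \<otimes> x"
  by (simp add: mul_assoc[symmetric] zpn_mul)
lemma PP_Suc': "zpn (int p) \<otimes> (zpn (int p ^ n) \<otimes> x) = zpn (int p * int p ^ n) \<otimes> x"
  by (simp add: mul_assoc[symmetric] zpn_mul)

lemma claim:
  assumes t1: "dv 1 (t d)"
  shows "n \<le> d \<Longrightarrow> s \<in> Lc \<Longrightarrow> s 0 = zp_zero \<Longrightarrow> (\<forall>i. 1 \<le> i \<and> i + n \<le> d \<longrightarrow> s i = zp_zero) \<Longrightarrow>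
     vsmul p (PP n) s \<in> H \<and> (\<forall>i. dv n (\<phi> (vsmul p (PP n) s) i))"
proof (induction n arbitrary: s)
  case 0
  have "s = vzero"
  proof (rule vec_eqI)
    show "s \<in> Lc" by (rule "0.prems"(2))
    show "s i = vzero i" if "i \<le> d" for i using "0.prems" that by (cases "i = 0") (auto simp: vapps)
  qed simp
  then have e: "vsmul p (PP 0) s = vzero" by simp
  have "dv 0 (vzero i)" for i by (simp add: vapps)
  then show ?case using e H_vzero phi_zero by simp
next
  case (Suc n)
  have sL: "s \<in> Lc" by (rule Suc.prems(2))
  define s' where "s' = (\<lambda>k. if 2 \<le> k \<and> k \<le> d then s (k - 1) else zp_zero)"
  have s'L: "s' \<in> Lc"
  proof (rule LcI)
    show "s' i \<in> C" if "i \<le> d" for i using sL by (simp add: s'_def Lc_C')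
    show "s' i = zp_zero" if "d < i" for i using that by (simp add: s'_def)
  qed
  have s'0: "s' 0 = zp_zero" by (simp add: s'_def)
  have s'z: "\<forall>i. 1 \<le> i \<and> i + n \<le> d \<longrightarrow> s' i = zp_zero"
  proof (intro allI impI)
    fix i assume i: "1 \<le> i \<and> i + n \<le> d"
    show "s' i = zp_zero"
    proof (cases "2 \<le> i")
      case True
      then have "1 \<le> i - 1 \<and> (i - 1) + Suc n \<le> d" using i by linarith
      then have "s (i - 1) = zp_zero" using Suc.prems(4) by blast
      then show ?thesis by (simp add: s'_def)
    next
      case False then show ?thesis by (simp add: s'_def)
    qed
  qed
  have IH: "vsmul p (PP n) s' \<in> H \<and> (\<forall>i. dv n (\<phi> (vsmul p (PP n) s') i))"
    using Suc.IH[OF _ s'L s'0 s'z] Suc.prems(1) by simp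
  define w1 where "w1 = vsmul p (s d \<otimes> PP n) (vsmul p P bd)"
  define w2 where "w2 = Dm (vsmul p (PP n) s')"
  have ident: "vsmul p (PP (Suc n)) s = vadd p w1 w2"
  proof (rule vec_eqI)
    show "vsmul p (PP (Suc n)) s \<in> Lc" using sL by simp
    show "vadd p w1 w2 \<in> Lc" using sL s'L by (simp add: w1_def w2_def Lc_C')
    fix i assume i: "i \<le> d"
    consider "i = 0" | "1 \<le> i \<and> i < d" | "i = d" using i by linarith
    then show "vsmul p (PP (Suc n)) s i = vadd p w1 w2 i"
    proof cases
      case 1 then show ?thesis using Suc.prems(3) d2 by (simp add: w1_def w2_def basis_app vapps)
    next
      case 2
      have "w2 i = P \<otimes> (a i \<otimes> (PP n \<otimes> s' 1) \<oplus> PP n \<otimes> s' (Suc i))"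
        using 2 by (simp add: w2_def Dm_def Dv_app vapps)
      also have "\<dots> = PP (Suc n) \<otimes> s i" using 2 sL by (simp add: s'_def PP_Suc' Lc_C')
      finally show ?thesis using 2 sL by (simp add: w1_def basis_app Lc_C' vapps)
    next
      case 3
      have "w2 i = P \<otimes> (a d \<otimes> (PP n \<otimes> s' 1) \<oplus> zp_zero)"
        using 3 d2 by (simp add: w2_def Dm_def Dv_app vapps)
      also have "\<dots> = zp_zero" using d2 by (simp add: s'_def)
      finally show ?thesis using 3 sL
        by (simp add: w1_def basis_app Lc_C' vapps) (metis PP_Suc' mul_comm)
    qed
  qed
  have w1H: "w1 \<in> H" using H_vsmul PbdH sL by (simp add: w1_def Lc_C')
  have pw1: "\<phi> w1 = vsmul p (s d \<otimes> PP n) t" using phi_smul PbdH sL by (simp add: w1_def t_def Lc_C')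
  have e2: "w2 \<in> H \<and> \<phi> w2 = vsmul p c' (Dm (\<phi> (vsmul p (PP n) s')))"
    using eq1[of "vsmul p (PP n) s'"] IH s'0 by (simp add: w2_def vapps)
  have sumH: "vadd p w1 w2 \<in> H" using H_vadd w1H e2 by blast
  have pf: "\<phi> (vadd p w1 w2) = vadd p (vsmul p (s d \<otimes> PP n) t) (vsmul p c' (Dm (\<phi> (vsmul p (PP n) s'))))"
    using phi_add[OF w1H] e2 pw1 by simp
  define x where "x = \<phi> (vsmul p (PP n) s')"
  have xL: "x \<in> Lc" using phi_Lc IH x_def by blast
  have xd: "dv n (x i)" for i using IH x_def by blast
  have tdv: "dv 1 (t i)" for i
  proof -
    consider "i = 0" | "1 \<le> i \<and> i < d" | "i = d" | "d < i" by linarith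
    then show ?thesis
    proof cases
      case 1 then show ?thesis using t_Lam by simp
    next
      case 2
      then have "dv (d - i) (t i)" using t_Lam by (simp add: N0_iff)
      moreover have "1 \<le> d - i" using 2 by linarith
      ultimately show ?thesis using dv_mono[OF Lc_C'[OF t_Lc]] by blast
    next
      case 3 then show ?thesis using t1 by simp
    next
      case 4 then show ?thesis using t_Lc Lc_out by simp
    qed
  qed
  have Dvx: "dv n (Dv x i)" for i
    by (cases "1 \<le> i \<and> i \<le> d") (auto simp: Dv_app xd dv_add dv_mulR Dv_def)
  have "dv (Suc n) (\<phi> (vsmul p (PP (Suc n)) s) i)" for i
  proof -
    have a1: "dv (n + 1) ((s d \<otimes> PP n) \<otimes> t i)"
      using dv_mul[of "s d \<otimes> PP n" "t i" n 1] tdv sL t_Lc by (simp add: Lc_C' dv_mulR dv_PP)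
    have a2: "dv (1 + n) (P \<otimes> Dv x i)"
      using dv_mul[of P "Dv x i" 1 n] Dvx xL by (simp add: Lc_C')
    show ?thesis using ident pf a1 a2 by (simp add: x_def[symmetric] Dm_def dv_add dv_mulR vapps)
  qed
  then show ?case using ident sumH by simp
qed

lemma case_gam: assumes t1: "dv 1 (t d)"
  shows "\<exists>I. lie_ideal p br N0 I \<and> invariant N0 H \<phi> I \<and> I \<noteq> {vzero}"
proof -
  have GH: "w \<in> H \<and> \<phi> w \<in> Gam" if wG: "w \<in> Gam" for w
  proof -
    obtain s where s: "s \<in> Lc" "w = vsmul p (PP d) s" "s 0 = zp_zero"
      using vdiv[of w d] wG by auto
    have c: "vsmul p (PP d) s \<in> H \<and> (\<forall>i. dv d (\<phi> (vsmul p (PP d) s) i))"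
      using claim[OF t1 le_refl s(1) s(3)] by simp
    then have wH: "w \<in> H" using s by simp
    have "\<phi> w 0 = zp_zero" using HA_A[OF wH] wG by simp
    then show ?thesis using wH c s phi_Lc[OF wH] by simp
  qed
  have "lie_ideal p br N0 Gam"
  proof (rule ideal_A)
    show "Gam \<subseteq> N0" using Gam_N0 by blast
    show "vzero \<in> Gam" by (simp add: vapps)
    show "vadd p x y \<in> Gam" if "x \<in> Gam" "y \<in> Gam" for x y using that by (simp add: vapps dv_add)
    show "vsmul p r x \<in> Gam" if "r \<in> C" "x \<in> Gam" for r x using that by (simp add: vapps dv_mulR)
    show "Dm w \<in> Gam" if wG: "w \<in> Gam" for w
    proof -
      have "dv d (Dv w i)" for i using wG
        by (cases "1 \<le> i \<and> i \<le> d") (auto simp: Dv_def dv_add dv_mulR)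
      then show ?thesis using wG by (simp add: Dm_def vapps dv_mulR)
    qed
  qed auto
  moreover have "invariant N0 H \<phi> Gam"
  proof (rule inv_of)
    show "Gam \<subseteq> H" using GH by blast
    show "\<phi> ` Gam \<subseteq> Gam" using GH by blast
  qed
  moreover have "Gam \<noteq> {vzero}"
  proof -
    have "dv d (vsmul p (PP d) bd i)" for i by (simp add: vapps dv_mulL dv_PP)
    then have m: "vsmul p (PP d) bd \<in> Gam" by (simp add: vapps)
    have "vsmul p (PP d) bd d = PP d" by (simp add: vapps basis_app)
    then have "vsmul p (PP d) bd \<noteq> vzero" using PP_nz[of d] by (metis vzero_app)
    then show ?thesis using m by blast
  qed
  ultimately show ?thesis by blast
qed

definition comb :: "int \<Rightarrow> int \<Rightarrow> vec" where
  "comb i j = vadd p (vsmul p (zpn i) bd) (vsmul p (zpn j) (Dm bd))"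

lemma DmbdN0: "Dm bd \<in> N0" using Dm_N0[OF bd_N0] .
lemma bdL: "bd \<in> Lc" using bd_N0 N0_Lc by blast
lemma DmbdL: "Dm bd \<in> Lc" using DmbdN0 N0_Lc by blast

lemma comb_ex: "\<exists>i j. \<not> (int p dvd i \<and> int p dvd j) \<and> comb i j \<in> H"
proof (rule ccontr)
  assume nex: "\<not> ?thesis"
  have nex': "comb i j \<notin> H" if "\<not> (int p dvd i \<and> int p dvd j)" for i j
    using nex that by blast
  define f where "f k = (if k < p then vsmul p (zpn (int k)) bd else Dm bd)" for k
  show False
  proof (rule count[of f])
    fix k
    show "f k \<in> N0"
    proof (cases "k < p")
      case True then show ?thesis unfolding f_def using N0_vsmul[OF zpn_C bd_N0] by simp
    next
      case False then show ?thesis unfolding f_def using DmbdN0 by simp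
    qed
  next
    fix a b assume ab: "a < b" "b \<le> p"
    have fa: "f a = vsmul p (zpn (int a)) bd" using ab unfolding f_def by simp
    show "vsub p (f b) (f a) \<notin> H"
    proof (cases "b < p")
      case True
      have fb: "f b = vsmul p (zpn (int b)) bd" using True unfolding f_def by simp
      have e1: "vsub p (f b) (f a) = vsmul p (zpn (int b) \<oplus> zneg (zpn (int a))) bd"
        unfolding fa fb by (rule vsub_smul_same[OF bdL])
      have e2: "zpn (int b) \<oplus> zneg (zpn (int a)) = zpn (int b - int a)" by (simp add: zpn_neg zpn_add)
      have e3: "vsmul p (zpn (int b - int a)) bd = comb (int b - int a) 0"
        unfolding comb_def using bdL by simp
      have e: "vsub p (f b) (f a) = comb (int b - int a) 0" using e1 e2 e3 by simp
      have "\<not> int p dvd (int b - int a)"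
      proof
        assume "int p dvd (int b - int a)"
        moreover have "0 < int b - int a" using ab by simp
        ultimately have "int p \<le> int b - int a" by (rule zdvd_imp_le)
        then show False using True ab by simp
      qed
      then have "\<not> (int p dvd (int b - int a) \<and> int p dvd 0)" by simp
      then show ?thesis using e nex' by metis
    next
      case False
      have fb: "f b = Dm bd" using False unfolding f_def by simp
      have "vsub p (f b) (f a) = comb (- int a) 1"
        unfolding fb fa comb_def
      proof (rule ext)
        fix k
        have n: "zneg (zpn (int a) \<otimes> bd k) = zpn (- int a) \<otimes> bd k" by (metis neg_mul zpn_neg)
        have o: "zpn 1 \<otimes> Dm bd k = Dm bd k" using DmbdL Lc_C' by simp
        show "vsub p (Dm bd) (vsmul p (zpn (int a)) bd) k = vadd p (vsmul p (zpn (- int a)) bd) (vsmul p (zpn 1) (Dm bd)) k"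
          unfolding vsub_app vadd_app vsmul_app n o by (rule add_comm)
      qed
      moreover have "\<not> (int p dvd (- int a) \<and> int p dvd 1)" using p_ge2 by simp
      ultimately show ?thesis using nex' by metis
    qed
  qed
qed


lemma case_unit: assumes cu: "\<not> dv 1 c'" and td: "\<not> dv 1 (t d)" shows False
proof -
  obtain i j where ij: "\<not> (int p dvd i \<and> int p dvd j)" "comb i j \<in> H" using comb_ex by blast
  define z where "z = comb i j"
  have zH: "z \<in> H" using ij z_def by simp
  have z0: "z 0 = zp_zero" unfolding z_def comb_def using d2 by (simp add: vapps basis_app)
  define u1 where "u1 = vsmul p P bd"
  have u1H: "u1 \<in> H" using PbdH u1_def by simp
  have u10: "u1 0 = zp_zero" using d2 by (simp add: u1_def vapps basis_app)
  have e1: "Dm u1 \<in> H \<and> \<phi> (Dm u1) = vsmul p c' (Dm t)" using eq1[OF u1H u10] by (simp add: t_def u1_def)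
  have Pz: "vsmul p P z = vadd p (vsmul p (zpn i) u1) (vsmul p (zpn j) (Dm u1))"
    unfolding z_def comb_def u1_def using bdL DmbdL
    by (simp add: Dm_vsmul vsmul_vadd vsmul_vsmul mul_comm)
  have "\<phi> (vsmul p P z) = vadd p (vsmul p (zpn i) t) (vsmul p (zpn j) (vsmul p c' (Dm t)))"
    unfolding Pz using phi_add H_vsmul phi_smul u1H e1 by (simp add: t_def u1_def)
  moreover have "\<phi> (vsmul p P z) = vsmul p P (\<phi> z)" using phi_smul[OF _ zH] by simp
  ultimately have E: "vsmul p P (\<phi> z) = vadd p (vsmul p (zpn i) t) (vsmul p (zpn j) (vsmul p c' (Dm t)))" by simp
  have pzL: "\<phi> z \<in> Lam" using phi_N0[OF zH] HA_A[OF zH z0] by simp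
  have tL: "t \<in> Lc" by (rule t_Lc)
  have t1: "dv 1 (t 1)"
  proof -
    have "dv (d - 1) (t 1)" using t_Lam d2 by (simp add: N0_iff)
    moreover have "1 \<le> d - 1" using d2 by linarith
    ultimately show ?thesis using dv_mono[OF Lc_C'[OF tL]] by blast
  qed
  have tdm1: "dv 1 (t (d - 1))"
  proof -
    have "\<forall>i\<in>{1..d}. dv (d - i) (t i)" using t_Lam unfolding N0_iff by blast
    moreover have "d - 1 \<in> {1..d}" using d2 by simp
    ultimately have "dv (d - (d - 1)) (t (d - 1))" by blast
    moreover have "d - (d - 1) = 1" using d2 by simp
    ultimately show ?thesis by simp
  qed
  have zdm1: "dv 1 (\<phi> z (d - 1))"
  proof -
    have "\<forall>i\<in>{1..d}. dv (d - i) (\<phi> z i)" using pzL unfolding N0_iff by blast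
    moreover have "d - 1 \<in> {1..d}" using d2 by simp
    ultimately have "dv (d - (d - 1)) (\<phi> z (d - 1))" by blast
    moreover have "d - (d - 1) = 1" using d2 by simp
    ultimately show ?thesis by simp
  qed
  have pzC: "\<phi> z k \<in> C" for k using pzL N0_Lc Lc_C' by blast
  have tC: "t k \<in> C" for k using tL Lc_C' by blast
  have aC1: "a (d - 1) \<in> C" "a d \<in> C" using d2 by auto
  have Ed: "P \<otimes> \<phi> z d = zpn i \<otimes> t d \<oplus> zpn j \<otimes> (c' \<otimes> (P \<otimes> (a d \<otimes> t 1)))"
    using fun_cong[OF E, of d] d2 tC aC1 by (simp add: vapps Dm_def Dv_app)
  define Y where "Y = zpn j \<otimes> (c' \<otimes> (P \<otimes> (a d \<otimes> t 1)))"
  have YC: "Y \<in> C" unfolding Y_def using tC cC aC1 by simp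
  have "dv 1 (P \<otimes> \<phi> z d)" by (simp add: dv_mulL)
  then have h1: "dv 1 (zpn i \<otimes> t d \<oplus> Y)" using Ed Y_def by simp
  have h2: "dv 1 Y" unfolding Y_def by (simp add: dv_mulL dv_mulR)
  have "dv 1 (zpn i \<otimes> t d)" using dv_sub_cancel[OF mul_C[OF zpn_C tC] YC h1 h2] .
  then have pi: "int p dvd i" using dv1_int[OF tC td] by blast
  have Ed1: "P \<otimes> \<phi> z (d - 1) = zpn i \<otimes> t (d - 1) \<oplus> (zpn j \<otimes> (c' \<otimes> (P \<otimes> (a (d - 1) \<otimes> t 1))) \<oplus> zpn j \<otimes> (c' \<otimes> (P \<otimes> t d)))"
  proof -
    have "d - 1 < d" "1 \<le> d - 1" "Suc (d - 1) = d" using d2 by auto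
    then show ?thesis using fun_cong[OF E, of "d - 1"] by (simp add: vapps Dm_def Dv_app distl)
  qed
  have L2: "dv (1 + 1) (P \<otimes> \<phi> z (d - 1))" using dv_mul[OF PP_C pzC dv_PP zdm1] .
  have A2: "dv (1 + 1) (zpn i \<otimes> t (d - 1))" using dv_mul[OF zpn_C tC _ tdm1] pi by (simp add: dv_zpn)
  define Y1 where "Y1 = zpn j \<otimes> (c' \<otimes> (P \<otimes> (a (d - 1) \<otimes> t 1)))"
  define Y2 where "Y2 = zpn j \<otimes> (c' \<otimes> (P \<otimes> t d))"
  have Y1C: "Y1 \<in> C" unfolding Y1_def using tC cC aC1 by simp
  have Y2C: "Y2 \<in> C" unfolding Y2_def using tC cC by simp
  have "dv (1 + 1) (P \<otimes> (a (d - 1) \<otimes> t 1))" using dv_mul[OF PP_C mul_C[OF aC1(1) tC] dv_PP dv_mulR[OF t1]] .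
  then have B2: "dv (1 + 1) Y1" unfolding Y1_def by (simp add: dv_mulR)
  have "dv (1 + 1) (zpn i \<otimes> t (d - 1) \<oplus> (Y1 \<oplus> Y2))" using L2 Ed1 Y1_def Y2_def by simp
  then have "dv (1 + 1) ((Y1 \<oplus> Y2) \<oplus> zpn i \<otimes> t (d - 1))" by (simp add: add_comm)
  then have "dv (1 + 1) (Y1 \<oplus> Y2)" using dv_sub_cancel[OF add_C[OF Y1C Y2C] mul_C[OF zpn_C tC] _ A2] by blast
  then have "dv (1 + 1) (Y2 \<oplus> Y1)" by (simp add: add_comm)
  then have "dv (1 + 1) Y2" using dv_sub_cancel[OF Y2C Y1C _ B2] by blast
  moreover have "Y2 = PP 1 \<otimes> (zpn j \<otimes> (c' \<otimes> t d))" unfolding Y2_def by (simp add: mul_lcomm)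
  ultimately have "dv (1 + 1) (PP 1 \<otimes> (zpn j \<otimes> (c' \<otimes> t d)))" by simp
  then have "dv 1 (zpn j \<otimes> (c' \<otimes> t d))" using dv_PP_mul[of "zpn j \<otimes> (c' \<otimes> t d)" 1 1] tC cC by simp
  then have "int p dvd j" using dv1_int[OF mul_C[OF cC tC] unit_mul[OF cC tC cu td]] by blast
  then show False using ij(1) pi by blast
qed

lemma PPd: "P \<otimes> (PP (d - 1) \<otimes> y) = PP d \<otimes> y"
  using PP_Suc[of "d - 1" y] d2 by simp

lemma Dm_pow_u1: "k < d \<Longrightarrow> (Dm ^^ k) (vsmul p P bd) = vsmul p (PP (Suc k)) (basis (d - k))"
proof (induction k)
  case 0 then show ?case by simp
next
  case (Suc k)
  then have IH: "(Dm ^^ k) (vsmul p P bd) = vsmul p (PP (Suc k)) (basis (d - k))" by simp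
  have bL: "basis (d - k) \<in> Lc" by simp
  have DB: "Dm (basis (d - k)) = vsmul p P (basis (d - Suc k))"
    using Suc.prems Dv_basis[of "d - k"] by (simp add: Dm_def)
  have "(Dm ^^ Suc k) (vsmul p P bd) = Dm ((Dm ^^ k) (vsmul p P bd))" by simp
  also have "\<dots> = Dm (vsmul p (PP (Suc k)) (basis (d - k)))" by (simp only: IH)
  also have "\<dots> = vsmul p (PP (Suc k)) (Dm (basis (d - k)))" by (rule Dm_vsmul[OF PP_C bL])
  also have "\<dots> = vsmul p (PP (Suc k)) (vsmul p P (basis (d - Suc k)))" by (simp only: DB)
  also have "\<dots> = vsmul p (PP (Suc (Suc k))) (basis (d - Suc k))"
    by (metis PP_mul Suc_eq_plus1 vsmul_vsmul)
  finally show ?case .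
qed

lemma case_nonunit: assumes cd: "dv 1 c'" and td: "\<not> dv 1 (t d)" shows False
proof -
  define u1 where "u1 = vsmul p P bd"
  have u1H: "u1 \<in> H" using PbdH u1_def by simp
  have u10: "u1 0 = zp_zero" using d2 by (simp add: u1_def vapps basis_app)
  have u1L: "u1 \<in> Lc" using u1H H_Lc by blast
  have it: "\<phi> ((Dm ^^ d) u1) = vsmul p (zpow c' d) ((Dm ^^ d) t)"
    using iter[OF u1H u10, of d] by (simp add: t_def u1_def)
  have dd: "Suc (d - 1) = d" "d - (d - 1) = 1" using d2 by auto
  have "(Dm ^^ d) u1 = Dm ((Dm ^^ (d - 1)) u1)" using dd by (metis funpow.simps(2) o_apply)
  also have "(Dm ^^ (d - 1)) u1 = vsmul p (PP d) (basis 1)" using Dm_pow_u1[of "d - 1"] d2 dd by (simp add: u1_def)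
  finally have Dmd: "(Dm ^^ d) u1 = Dm (vsmul p (PP d) (basis 1))" .
  define sv where "sv = (\<lambda>k. if 2 \<le> k \<and> k \<le> d then a (k - 1) else zp_zero)"
  have svL: "sv \<in> Lc"
  proof (rule LcI)
    show "sv i \<in> C" if "i \<le> d" for i using that by (simp add: sv_def)
    show "sv i = zp_zero" if "d < i" for i using that by (simp add: sv_def)
  qed
  have sv0: "sv 0 = zp_zero" "sv 1 = zp_zero" by (simp_all add: sv_def)
  have ident: "Dm (vsmul p (PP d) (basis 1)) = vadd p (vsmul p (a d \<otimes> PP d) u1) (Dm (vsmul p (PP d) sv))"
  proof (rule vec_eqI)
    show "Dm (vsmul p (PP d) (basis 1)) \<in> Lc" using d2 by simp
    show "vadd p (vsmul p (a d \<otimes> PP d) u1) (Dm (vsmul p (PP d) sv)) \<in> Lc" using u1L svL d2 by simp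
    fix k assume k: "k \<le> d"
    consider "k = 0" | "1 \<le> k \<and> k < d" | "k = d" using k by linarith
    then show "Dm (vsmul p (PP d) (basis 1)) k = vadd p (vsmul p (a d \<otimes> PP d) u1) (Dm (vsmul p (PP d) sv)) k"
    proof cases
      case 1 then show ?thesis using d2 by (simp add: Dm_def vapps u1_def basis_app)
    next
      case 2
      have l: "Dm (vsmul p (PP d) (basis 1)) k = P \<otimes> (a k \<otimes> PP d)"
        using 2 d2 by (simp add: Dm_def vapps Dv_app basis_app)
      have r: "vadd p (vsmul p (a d \<otimes> PP d) u1) (Dm (vsmul p (PP d) sv)) k = P \<otimes> (PP d \<otimes> a k)"
        using 2 d2 by (simp add: Dm_def vapps Dv_app basis_app u1_def sv_def)
      show ?thesis using l r by (simp add: mul_comm)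
    next
      case 3
      have l: "Dm (vsmul p (PP d) (basis 1)) k = P \<otimes> (a d \<otimes> PP d)"
        using 3 d2 by (simp add: Dm_def vapps Dv_app basis_app)
      have r: "vadd p (vsmul p (a d \<otimes> PP d) u1) (Dm (vsmul p (PP d) sv)) k = (a d \<otimes> PP d) \<otimes> P"
        using 3 d2 by (simp add: Dm_def vapps Dv_app basis_app u1_def sv_def)
      show ?thesis using l r by (simp add: mul_comm)
    qed
  qed

  have svN: "vsmul p (PP (d - 2)) sv \<in> N0"
  proof -
    have "dv (d - i) (vsmul p (PP (d - 2)) sv i)" if "1 \<le> i" "i \<le> d" for i
    proof (cases "2 \<le> i")
      case True
      have "dv (d - 2) (PP (d - 2) \<otimes> sv i)" by (simp add: dv_mulL dv_PP)
      then show ?thesis using dv_mono[of "PP (d - 2) \<otimes> sv i" "d - 2" "d - i"] True svL Lc_C'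
        by (simp add: vapps)
    next
      case False then have "i = 1" using that by simp
      then show ?thesis using sv0 by (simp add: vapps)
    qed
    then show ?thesis unfolding N0_iff using svL sv0 by (simp add: vapps)
  qed
  have e1: "vsmul p P (vsmul p (PP (d - 2)) sv) = vsmul p (PP (d - 1)) sv"
  proof -
    have h: "1 + (d - 2) = d - 1" using d2 by simp
    have "PP 1 \<otimes> PP (d - 2) = PP (d - 1)" using PP_mul[of 1 "d - 2"] unfolding h .
    then show ?thesis by (metis vsmul_vsmul)
  qed
  have e2: "vsmul p P (vsmul p (PP (d - 1)) sv) = vsmul p (PP d) sv"
  proof -
    have h: "1 + (d - 1) = d" using d2 by simp
    have "PP 1 \<otimes> PP (d - 1) = PP d" using PP_mul[of 1 "d - 1"] unfolding h .
    then show ?thesis by (metis vsmul_vsmul)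
  qed
  have s1H: "vsmul p (PP (d - 1)) sv \<in> H" using pN0[OF svN] e1 by simp
  have s1_0: "vsmul p (PP (d - 1)) sv 0 = zp_zero" using sv0 by (simp add: vapps)
  have s2H: "vsmul p (PP d) sv \<in> H" using H_vsmul[OF PP_C s1H, of 1] e2 by simp
  have s2_0: "vsmul p (PP d) sv 0 = zp_zero" using sv0 by (simp add: vapps)
  define x' where "x' = \<phi> (vsmul p (PP (d - 1)) sv)"
  have x'L: "x' \<in> Lam" using phi_N0[OF s1H] HA_A[OF s1H s1_0] x'_def by simp
  have x_eq: "\<phi> (vsmul p (PP d) sv) = vsmul p P x'" using phi_smul[OF PP_C s1H, of 1] e2 x'_def by simp
  have "dv (d - 1) (x' 1)" using x'L d2 unfolding N0_iff by auto
  then obtain z1 where z1: "z1 \<in> C" "x' 1 = PP (d - 1) \<otimes> z1"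
    using division[of "x' 1" "d - 1"] x'L N0_Lc Lc_C' by blast
  define y' where "y' = (Dm ^^ (d - 1)) t"
  have y'L: "y' \<in> Lam" unfolding y'_def using Dm_pow_N0 Dm_pow_0 t_Lam by auto
  have "dv (d - 1) (y' 1)" using y'L d2 unfolding N0_iff by auto
  then obtain z2 where z2: "z2 \<in> C" "y' 1 = PP (d - 1) \<otimes> z2"
    using division[of "y' 1" "d - 1"] y'L N0_Lc Lc_C' by blast
  have Dmdt: "(Dm ^^ d) t = Dm y'" unfolding y'_def using dd by (metis funpow.simps(2) o_apply)
  have e3: "Dm (vsmul p (PP d) sv) \<in> H \<and> \<phi> (Dm (vsmul p (PP d) sv)) = vsmul p c' (Dm (vsmul p P x'))"
    using eq1[OF s2H s2_0] x_eq by simp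
  have w1H: "vsmul p (a d \<otimes> PP d) u1 \<in> H" using H_vsmul u1H d2 by simp
  have "\<phi> ((Dm ^^ d) u1) = vadd p (vsmul p (a d \<otimes> PP d) t) (vsmul p c' (Dm (vsmul p P x')))"
    unfolding Dmd ident using phi_add[OF w1H] e3 phi_smul u1H d2 by (simp add: t_def u1_def)
  then have EQ: "vsmul p (zpow c' d) (Dm y') = vadd p (vsmul p (a d \<otimes> PP d) t) (vsmul p c' (Dm (vsmul p P x')))"
    using it Dmdt by simp
  have adC: "a d \<in> C" using d2 by simp
  have x'C: "x' k \<in> C" for k using x'L N0_Lc Lc_C' by blast
  have tC: "t k \<in> C" for k using t_Lc Lc_C' by blast
  have y'C: "y' k \<in> C" for k using y'L N0_Lc Lc_C' by blast
  have L: "zpow c' d \<otimes> (P \<otimes> (a d \<otimes> y' 1 \<oplus> zp_zero)) = (a d \<otimes> PP d) \<otimes> (zpow c' d \<otimes> z2)"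
  proof -
    have "zpow c' d \<otimes> (P \<otimes> (a d \<otimes> y' 1 \<oplus> zp_zero)) = zpow c' d \<otimes> (a d \<otimes> (P \<otimes> (PP (d - 1) \<otimes> z2)))"
      using adC y'C z2 by (simp add: mul_lcomm)
    also have "\<dots> = zpow c' d \<otimes> (a d \<otimes> (PP d \<otimes> z2))" by (simp only: PPd)
    also have "\<dots> = (a d \<otimes> PP d) \<otimes> (zpow c' d \<otimes> z2)" by (simp add: mul_assoc mul_lcomm)
    finally show ?thesis .
  qed
  have R: "(a d \<otimes> PP d) \<otimes> t d \<oplus> c' \<otimes> (P \<otimes> (a d \<otimes> (P \<otimes> x' 1) \<oplus> zp_zero))
      = (a d \<otimes> PP d) \<otimes> (t d \<oplus> c' \<otimes> (P \<otimes> z1))"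
  proof -
    have "c' \<otimes> (P \<otimes> (a d \<otimes> (P \<otimes> x' 1) \<oplus> zp_zero)) = c' \<otimes> (P \<otimes> (a d \<otimes> (P \<otimes> (PP (d - 1) \<otimes> z1))))"
      using adC x'C z1 by simp
    also have "\<dots> = c' \<otimes> (P \<otimes> (a d \<otimes> (PP d \<otimes> z1)))" by (simp only: PPd)
    also have "\<dots> = (a d \<otimes> PP d) \<otimes> (c' \<otimes> (P \<otimes> z1))" by (simp add: mul_assoc mul_lcomm)
    finally show ?thesis by (simp add: distl)
  qed
  have "zpow c' d \<otimes> (P \<otimes> (a d \<otimes> y' 1 \<oplus> zp_zero)) = (a d \<otimes> PP d) \<otimes> t d \<oplus> c' \<otimes> (P \<otimes> (a d \<otimes> (P \<otimes> x' 1) \<oplus> zp_zero))"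
    using fun_cong[OF EQ, of d] d2 by (simp add: vapps Dm_def Dv_app)
  then have "(a d \<otimes> PP d) \<otimes> (zpow c' d \<otimes> z2) = (a d \<otimes> PP d) \<otimes> (t d \<oplus> c' \<otimes> (P \<otimes> z1))"
    using L R by simp
  moreover have "a d \<otimes> PP d \<noteq> zp_zero" using domain[OF adC PP_C] ad PP_nz by blast
  ultimately have E2: "zpow c' d \<otimes> z2 = t d \<oplus> c' \<otimes> (P \<otimes> z1)"
    using mul_cancel[OF mul_C[OF adC PP_C]] cC z1 z2 tC by simp
  have "zpow c' d = c' \<otimes> zpow c' (d - 1)" using dd by (metis zpow.simps(2))
  then have "dv 1 (zpow c' d \<otimes> z2)" using cd by (simp add: dv_mulL)
  then have h1: "dv 1 (t d \<oplus> c' \<otimes> (P \<otimes> z1))" using E2 by simp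
  have h2: "dv 1 (c' \<otimes> (P \<otimes> z1))" using cd by (simp add: dv_mulL)
  have YC: "c' \<otimes> (P \<otimes> z1) \<in> C" using cC z1 by simp
  have "dv 1 (t d)" using dv_sub_cancel[OF tC YC h1 h2] .
  then show False using td by simp
qed


lemma ve1_main: "\<exists>I. lie_ideal p br N0 I \<and> invariant N0 H \<phi> I \<and> I \<noteq> {vzero}"
proof (cases "dv 1 (t d)")
  case True then show ?thesis using case_gam by blast
next
  case False
  then show ?thesis using case_unit case_nonunit by blast
qed

end

context ve
begin

lemma case_c1: assumes c1: "\<exists>h\<in>H. \<not> dv 2 (h 0)"
  shows "\<exists>I. lie_ideal p br N0 I \<and> invariant N0 H \<phi> I \<and> I \<noteq> {vzero}"
proof -
  obtain h where h: "h \<in> H" "\<not> dv 2 (h 0)" using c1 by blast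
  have hL: "h \<in> Lc" using h H_Lc by blast
  have "dv 1 (h 0)" using H_N0[OF h(1)] by (simp add: N0_iff)
  then obtain u where u: "u \<in> C" "h 0 = PP 1 \<otimes> u" using division[of "h 0" 1] hL Lc_C' by blast
  have nu: "\<not> dv 1 u"
  proof
    assume "dv 1 u"
    then have "dv (1 + 1) (PP 1 \<otimes> u)" using dv_PP_mul[OF u(1), of 1 1] by blast
    then show False using h(2) u(2) by (simp add: numeral_2_eq_2)
  qed
  obtain w where w: "w \<in> C" "u \<otimes> w = zone" using unit_inv[OF u(1) nu] by blast
  define h0 where "h0 = vsmul p w h"
  have h0H: "h0 \<in> H" using H_vsmul[OF w(1) h(1)] h0_def by simp
  have h00: "h0 0 = PP 1"
  proof -
    have "h0 0 = w \<otimes> (PP 1 \<otimes> u)" using u(2) by (simp add: h0_def vapps)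
    also have "\<dots> = PP 1 \<otimes> (u \<otimes> w)" by (simp add: mul_assoc mul_comm mul_lcomm)
    also have "\<dots> = PP 1" using w by simp
    finally show ?thesis .
  qed
  have "dv 1 (\<phi> h0 0)" using phi_N0[OF h0H] by (simp add: N0_iff)
  then obtain c' where c': "c' \<in> C" "\<phi> h0 0 = PP 1 \<otimes> c'"
    using division[of "\<phi> h0 0" 1] phi_Lc[OF h0H] Lc_C' by blast
  define K where "K = {v \<in> H. v 0 = zp_zero \<and> \<phi> v = vzero}"
  show ?thesis
  proof (cases "K = {vzero}")
    case False
    have h0L: "h0 \<in> Lc" using h0H H_Lc by blast
    have vzK: "vzero \<in> K" by (simp add: K_def vapps)
    have "lie_ideal p br N0 K"
    proof (rule ideal_A)
      show "K \<subseteq> N0" using H_N0 K_def by blast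
      show "vzero \<in> K" by (rule vzK)
      show "vadd p x y \<in> K" if "x \<in> K" "y \<in> K" for x y
        using that H_vadd phi_add by (simp add: K_def vapps)
      show "vsmul p r x \<in> K" if "r \<in> C" "x \<in> K" for r x
        using that H_vsmul phi_smul by (simp add: K_def vapps)
      show "Dm x \<in> K" if xK: "x \<in> K" for x
      proof -
        have xH: "x \<in> H" and x0: "x 0 = zp_zero" and px: "\<phi> x = vzero" using xK K_def by auto
        have xL: "x \<in> Lc" using xH H_Lc by blast
        have b: "br h0 x = Dm x" using br_A[OF h0L xL x0] h00 by (simp add: Dm_def)
        have "\<phi> (br h0 x) = br (\<phi> h0) vzero" using phi_br[OF h0H xH] px by simp
        also have "\<dots> = vzero" using br_A[OF phi_Lc[OF h0H] vzero_Lc] by (simp add: vapps)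
        finally show ?thesis using b H_br[OF h0H xH] by (simp add: K_def Dm_def vapps)
      qed
    qed (auto simp: K_def)
    moreover have "invariant N0 H \<phi> K"
    proof (rule inv_of)
      show "K \<subseteq> H" using K_def by blast
      show "\<phi> ` K \<subseteq> K" using K_def vzK by auto
    qed
    moreover note False
    ultimately show ?thesis by blast
  next
    case True
    have inj: "u = vzero" if "u \<in> H" "u 0 = zp_zero" "\<phi> u = vzero" for u
      using that True K_def by blast
    interpret v1: ve1 p d a H \<phi> h0 c'
      by unfold_locales (use h0H h00 c' inj in auto)
    show ?thesis by (rule v1.ve1_main)
  qed
qed

lemma ve_main: "\<exists>I. lie_ideal p br N0 I \<and> invariant N0 H \<phi> I \<and> I \<noteq> {vzero}"
  using case_cp case_c1 by blast

end

context lie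
begin

theorem lie_main: "\<exists>N. subalg p br Lc N \<and> finite_index p Lc N \<and> \<not> self_similar p br N p"
proof (intro exI conjI)
  show "subalg p br Lc N0" by (rule N0_subalg)
  show "finite_index p Lc N0" by (rule N0_finite_index)
  show "\<not> self_similar p br N0 p"
  proof
    assume "self_similar p br N0 p"
    then obtain H \<phi> where v: "virt_endo p br N0 H \<phi>" "lindex p N0 H = p" "simple_ve p br N0 H \<phi>"
      unfolding self_similar_def by blast
    interpret vv: ve p d a H \<phi> by unfold_locales (use v in auto)
    obtain I where "lie_ideal p br N0 I" "invariant N0 H \<phi> I" "I \<noteq> {vzero}" using vv.ve_main by blast
    then show False using v(3) unfolding simple_ve_def by blast
  qed
qed

end

theorem corollary1p26:
  fixes p d :: nat and a :: "nat \<Rightarrow> zp"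
  assumes "prime p"
    and "d \<ge> 2"
    and "\<forall>k\<in>{1..d}. a k \<in> zp_carrier p"
    and "a d \<noteq> zp_zero"
  shows "\<exists>N. subalg p (Lbr p d a) (Lcar p d) N \<and> finite_index p (Lcar p d) N \<and>
             \<not> self_similar p (Lbr p d a) N p"
proof -
  interpret l: lie p d a by unfold_locales (use assms in auto)
  show ?thesis by (rule l.lie_main)
qed


end
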